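(* Fix a classifier $f_\theta$ and a sequence of queueing systems as described in the context, and suppose Assumptions (DGP), (HT) and (UI) hold. Under any work-conserving p-FCFS policy, for all $k,l\in[K]$ and $t\in[0,1]$, \[ \tilde N_{kl}^n(t)=\frac{p_k^n q_{kl}^n}{\sum_{r=1}^K p_r^n q_{rl}^n}\,\tilde N_l^n(t)+o_n(1), \] where $o_n(1)$ denotes a term whose supremum over $t\in[0,1]$ tends to $0$ as $n\to\infty$.
   Context: Model. For each $n\in\mathbb N$, system $n$ is a single-server queue on the time horizon $[0,n]$, starting empty, with $K$ classes. Jobs $i=1,2,\dots$ arrive in a single stream with interarrival times $u_i^n$; each job has a feature vector $X_i^n\in\mathbb R^d$, a one-hot true class $Y_i^n=(Y_{i1}^n,\dots,Y_{iK}^n)\in\{0,1\}^K$ and a service requirement $v_i^n>0$. A fixed classifier $f_\theta$ gives the one-hot predicted class $\hat Y_i^n=f_\theta(X_i^n)$. Let $\lambda^n=1/E[u_1^n]$, $p_k^n=P(Y_{1k}^n=1)$, $1/\mu_k^n=E[v_1^n\mid Y_{1k}^n=1]$, $q_{kl}^n=P(\hat Y_{1l}^n=1\mid Y_{1k}^n=1)$, and $A_0^n(t)=\max\{m:\sum_{i=1}^m u_i^n\le t\}$. Assumption (DGP): for each $n$, (i) $\{(u_i^n,v_i^n,X_i^n,Y_i^n)\}_{i\ge1}$ is i.i.d.; (ii) $\{u_i^n\}$ is independent of $\{(v_i^n,X_i^n,Y_i^n)\}$; (iii) $v_i^n$ and $X_i^n$ are conditionally independent given $Y_i^n$. Assumption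 (HT): there exist $p_k,q_{kl}\in[0,1]$ and positive $\lambda,\mu_k$ with $\sum_k p_kq_{kl}>0$ for all $l$, $\lambda\sum_k p_k/\mu_k=1$, and $n^{1/2}(\lambda^n-\lambda)$, $n^{1/2}(\mu_k^n-\mu_k)$, $n^{1/2}(p_k^n-p_k)$, $n^{1/2}(q_{kl}^n-q_{kl})$ all tend to $0$. Assumption (UI): for each $n$, $E[(u_1^n)^2],E[(v_1^n)^2],E[(X_1^n)^2]<\infty$, and $E[(u_1^n)^2\mathbf 1\{u_1^n>x\}]\le g_u(x)$, $E[(v_1^n)^2\mathbf 1\{v_1^n>x\}]\le g_v(x)$ for fixed functions $g_u,g_v$ tending to $0$ as $x\to\infty$; moreover $E[(u_1^n)^2]\to\alpha_u\in(0,\infty)$ and $E[(v_1^n)^2\mid Y_{1k}^n=1]\to\alpha_{v,k}\in(0,\infty)$ for each $k$. Policies. A scheduling policy decides at each time which predicted class the server works on (preemption between classes allowed, based on information available so far). It is p-FCFS if within each predicted class jobs are served in order of arrival, and work-conserving if the server never idles while jobs are present. Processes. $N_{kl}^n(t)$ is the number of jobs of true class $k$ predicted as class $l$ present (waiting or in service) at time $t$ in system $n$, $N_l^n=\sum_k N_{kl}^n$, and $\tilde N_{kl}^n(t)=n^{-1/2}N_{kl}^n(nt)$, $\tilde N_l^n(t)=n^{-1/2}N_l^n(nt)$ for $t\in[0,1]$. Sample-path convention: all processes are realized (via a Skorohod-type construction preserving distributions) on a common probability space on which the diffusion-scaled primitive processes converge uniformly on $[0,1]$ almost surely to a multidimensional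 Brownian motion; the statement holds almost surely on this space. *)

theory Defs
  imports "HOL-Probability.Probability"
begin

text \<open>
  Jobs are indexed 0,1,2,... (job i here is job i+1
  of the paper).  For system n and outcome w:
    u n i w  interarrival time,   v n i w  service requirement,
    X n i w  feature vector (type 'x, a Euclidean space = R^d),
    Y n i w  true class, an index in {0..<K} (encodes the one-hot vector Y_i),
    f (X n i w)  predicted class (index in {0..<K}) given by the fixed classifier f.
  A scheduling policy is given, for every n and w, by a selection c n w :: real => nat option:
  c n w r = Some l means the server works on predicted class l at time r, None means idle.
\<close>

definition lam_n :: "'w measure \<Rightarrow> (nat \<Rightarrow> nat \<Rightarrow> 'w \<Rightarrow> real) \<Rightarrow> nat \<Rightarrow> real" where
  "lam_n M u n = 1 / (\<integral>w. u n 0 w \<partial>M)"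

definition p_n :: "'w measure \<Rightarrow> (nat \<Rightarrow> nat \<Rightarrow> 'w \<Rightarrow> nat) \<Rightarrow> nat \<Rightarrow> nat \<Rightarrow> real" where
  "p_n M Y n k = measure M {w \<in> space M. Y n 0 w = k}"

definition q_n :: "'w measure \<Rightarrow> (nat \<Rightarrow> nat \<Rightarrow> 'w \<Rightarrow> 'x) \<Rightarrow> (nat \<Rightarrow> nat \<Rightarrow> 'w \<Rightarrow> nat)
    \<Rightarrow> ('x \<Rightarrow> nat) \<Rightarrow> nat \<Rightarrow> nat \<Rightarrow> nat \<Rightarrow> real" where
  "q_n M X Y f n k l =
     measure M {w \<in> space M. Y n 0 w = k \<and> f (X n 0 w) = l} / p_n M Y n k"

definition cond_exp_class :: "'w measure \<Rightarrow> ('w \<Rightarrow> real) \<Rightarrow> ('w \<Rightarrow> nat) \<Rightarrow> nat \<Rightarrow> real" where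
  "cond_exp_class M Z C k =
     (\<integral>w. Z w * indicator {w. C w = k} w \<partial>M) / measure M {w \<in> space M. C w = k}"

definition mu_n :: "'w measure \<Rightarrow> (nat \<Rightarrow> nat \<Rightarrow> 'w \<Rightarrow> real) \<Rightarrow> (nat \<Rightarrow> nat \<Rightarrow> 'w \<Rightarrow> nat)
    \<Rightarrow> nat \<Rightarrow> nat \<Rightarrow> real" where
  "mu_n M v Y n k = 1 / cond_exp_class M (v n 0) (Y n 0) k"

definition A0 :: "(nat \<Rightarrow> real) \<Rightarrow> real \<Rightarrow> nat" where
  "A0 uu t = (GREATEST m. (\<Sum>i<m. uu i) \<le> t)"

definition cumwork :: "(nat \<Rightarrow> real) \<Rightarrow> (nat \<Rightarrow> nat) \<Rightarrow> nat \<Rightarrow> nat \<Rightarrow> real" where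
  "cumwork vv yh l i = (\<Sum>j\<in>{j. j \<le> i \<and> yh j = l}. vv j)"

definition alloc :: "(real \<Rightarrow> nat option) \<Rightarrow> nat \<Rightarrow> real \<Rightarrow> real" where
  "alloc cc l s = measure lebesgue {r \<in> {0..s}. cc r = Some l}"

text \<open>Since within a
  predicted class jobs are served in order of arrival (p-FCFS), the effort alloc cc l s given
  to class l has completed exactly those class-l jobs whose cumulative class-l work is covered.\<close>
definition Nkl :: "(nat \<Rightarrow> real) \<Rightarrow> (nat \<Rightarrow> real) \<Rightarrow> (nat \<Rightarrow> nat) \<Rightarrow> (nat \<Rightarrow> nat)
    \<Rightarrow> (real \<Rightarrow> nat option) \<Rightarrow> nat \<Rightarrow> nat \<Rightarrow> real \<Rightarrow> nat" where
  "Nkl uu vv yy yh cc k l s =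
     card {i. i < A0 uu s \<and> yy i = k \<and> yh i = l \<and> \<not> (cumwork vv yh l i \<le> alloc cc l s)}"

definition Nl :: "nat \<Rightarrow> (nat \<Rightarrow> real) \<Rightarrow> (nat \<Rightarrow> real) \<Rightarrow> (nat \<Rightarrow> nat) \<Rightarrow> (nat \<Rightarrow> nat)
    \<Rightarrow> (real \<Rightarrow> nat option) \<Rightarrow> nat \<Rightarrow> real \<Rightarrow> nat" where
  "Nl K uu vv yy yh cc l s = (\<Sum>k<K. Nkl uu vv yy yh cc k l s)"

text \<open>A p-FCFS policy (FCFS within each predicted class is built into Nkl) which is
  work-conserving on the horizon [0,H]: the server only works on a predicted class that has
  jobs present and never idles while jobs are present.\<close>
definition wc_pfcfs_policy :: "nat \<Rightarrow> real \<Rightarrow> (nat \<Rightarrow> real) \<Rightarrow> (nat \<Rightarrow> real) \<Rightarrow> (nat \<Rightarrow> nat)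
    \<Rightarrow> (nat \<Rightarrow> nat) \<Rightarrow> (real \<Rightarrow> nat option) \<Rightarrow> bool" where
  "wc_pfcfs_policy K H uu vv yy yh cc \<longleftrightarrow>
     (\<forall>l. {r. cc r = Some l} \<in> sets lebesgue) \<and>
     (\<forall>r\<in>{0..H}.
        (\<forall>l. cc r = Some l \<longrightarrow> l < K \<and> Nl K uu vv yy yh cc l r > 0) \<and>
        (cc r = None \<longrightarrow> (\<Sum>l<K. Nl K uu vv yy yh cc l r) = 0))"

datatype prim = PA | PC nat nat | PV nat nat

definition Prim :: "nat \<Rightarrow> prim set" where
  "Prim K = insert PA ({PC k l |k l. k < K \<and> l < K} \<union> {PV k l |k l. k < K \<and> l < K})"

definition prim_hat :: "'w measure \<Rightarrow> (nat \<Rightarrow> nat \<Rightarrow> 'w \<Rightarrow> real) \<Rightarrow> (nat \<Rightarrow> nat \<Rightarrow> 'w \<Rightarrow> real)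
    \<Rightarrow> (nat \<Rightarrow> nat \<Rightarrow> 'w \<Rightarrow> 'x) \<Rightarrow> (nat \<Rightarrow> nat \<Rightarrow> 'w \<Rightarrow> nat) \<Rightarrow> ('x \<Rightarrow> nat)
    \<Rightarrow> nat \<Rightarrow> 'w \<Rightarrow> real \<Rightarrow> prim \<Rightarrow> real" where
  "prim_hat M u v X Y f n w t i =
     (let a = A0 (\<lambda>j. u n j w) (real n * t) in
      case i of
        PA \<Rightarrow> (real a - lam_n M u n * real n * t) / sqrt (real n)
      | PC k l \<Rightarrow> (real (card {j. j < a \<and> Y n j w = k \<and> f (X n j w) = l})
                   - p_n M Y n k * q_n M X Y f n k l * real a) / sqrt (real n)
      | PV k l \<Rightarrow> (\<Sum>j\<in>{j. j < a \<and> Y n j w = k \<and> f (X n j w) = l}. v n j w - 1 / mu_n M v Y n k)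
                   / sqrt (real n))"

definition centered_gaussian :: "'w measure \<Rightarrow> ('w \<Rightarrow> real) \<Rightarrow> real \<Rightarrow> bool" where
  "centered_gaussian M Z s2 \<longleftrightarrow>
     (s2 = 0 \<and> Z \<in> borel_measurable M \<and> (AE w in M. Z w = 0)) \<or>
     (s2 > 0 \<and> distributed M lborel Z (normal_density 0 (sqrt s2)))"

definition brownian_motion01 :: "'w measure \<Rightarrow> 'i set \<Rightarrow> (real \<Rightarrow> 'w \<Rightarrow> 'i \<Rightarrow> real) \<Rightarrow> bool" where
  "brownian_motion01 M I B \<longleftrightarrow>
     finite I \<and>
     (AE w in M. \<forall>i\<in>I. B 0 w i = 0 \<and> continuous_on {0..1} (\<lambda>t. B t w i)) \<and>
     (\<exists>S :: 'i \<Rightarrow> 'i \<Rightarrow> real. \<forall>(a :: 'i \<Rightarrow> real) s t. 0 \<le> s \<longrightarrow> s \<le> t \<longrightarrow> t \<le> 1 \<longrightarrow>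
        centered_gaussian M (\<lambda>w. \<Sum>i\<in>I. a i * (B t w i - B s w i))
          ((t - s) * (\<Sum>i\<in>I. \<Sum>j\<in>I. a i * a j * S i j))) \<and>
     (\<forall>(ts :: nat \<Rightarrow> real) m. 0 \<le> ts 0 \<longrightarrow> ts m \<le> 1 \<longrightarrow> (\<forall>j<m. ts j \<le> ts (Suc j)) \<longrightarrow>
        prob_space.indep_vars M (\<lambda>_. PiM I (\<lambda>_. borel))
          (\<lambda>j w. restrict (\<lambda>i. B (ts (Suc j)) w i - B (ts j) w i) I) {..<m})"

end

theory Submission
  imports Defs
begin


lemma lm_Ioc: "{a<..b::real} \<in> lmeasurable"
  by (rule fmeasurableI2[of "{a..b}"]) auto

locale det =
  fixes K :: nat and H :: real and uu vv :: "nat \<Rightarrow> real" and yy yh :: "nat \<Rightarrow> nat"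
    and cc :: "real \<Rightarrow> nat option"
  assumes uu_nn: "\<And>i. 0 \<le> uu i" and vv_pos: "\<And>i. 0 < vv i"
    and yy_lt: "\<And>i. yy i < K" and yh_lt: "\<And>i. yh i < K"
    and bnd: "\<exists>m. H < (\<Sum>i<m. uu i)"
    and wc: "wc_pfcfs_policy K H uu vv yy yh cc"
begin

definition arr :: "nat \<Rightarrow> real" where "arr i = (\<Sum>j<Suc i. uu j)"
definition wk :: "nat \<Rightarrow> real \<Rightarrow> real" where
  "wk l r = (\<Sum>j\<in>{j. j < A0 uu r \<and> yh j = l}. vv j)"
definition Al :: "real \<Rightarrow> real" where "Al r = (\<Sum>l<K. alloc cc l r)"
definition VA :: "real \<Rightarrow> real" where "VA r = (\<Sum>j<A0 uu r. vv j)"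

lemma psum_mono: "m \<le> m' \<Longrightarrow> (\<Sum>i<m. uu i) \<le> (\<Sum>i<m'. uu i)"
  by (rule sum_mono2) (auto simp: uu_nn)

lemma A0_char:
  assumes "0 \<le> r" "r \<le> H" shows "i < A0 uu r \<longleftrightarrow> arr i \<le> r"
proof -
  obtain m where m: "H < (\<Sum>i<m. uu i)" using bnd by auto
  let ?P = "\<lambda>k. (\<Sum>i<k. uu i) \<le> r"
  have bd: "k \<le> m" if "?P k" for k
  proof (rule ccontr)
    assume "\<not> k \<le> m"
    then have "(\<Sum>i<m. uu i) \<le> (\<Sum>i<k. uu i)" by (intro psum_mono) auto
    with m that assms show False by linarith
  qed
  have P0: "?P 0" using assms by simp
  have G: "?P (A0 uu r)" unfolding A0_def by (rule GreatestI_nat[where P="?P", OF P0 bd])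
  have Gle: "k \<le> A0 uu r" if "?P k" for k unfolding A0_def by (rule Greatest_le_nat[where P="?P", OF that bd])
  show ?thesis
  proof
    assume "i < A0 uu r"
    then have "arr i \<le> (\<Sum>i<A0 uu r. uu i)" unfolding arr_def by (intro psum_mono) auto
    with G show "arr i \<le> r" by linarith
  next
    assume "arr i \<le> r"
    then have "?P (Suc i)" by (simp add: arr_def)
    then have "Suc i \<le> A0 uu r" by (rule Gle)
    then show "i < A0 uu r" by simp
  qed
qed

lemma arr_mono: "i \<le> j \<Longrightarrow> arr i \<le> arr j"
  unfolding arr_def by (intro psum_mono) auto

lemma arr_nn: "0 \<le> arr i"
  unfolding arr_def by (intro sum_nonneg) (auto simp: uu_nn)

lemma A_mono:
  assumes "0 \<le> r" "r \<le> r'" "r' \<le> H" shows "A0 uu r \<le> A0 uu r'"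
proof (rule ccontr)
  assume "\<not> A0 uu r \<le> A0 uu r'"
  then have "A0 uu r' < A0 uu r" by simp
  have rH: "r \<le> H" using assms by linarith
  have r'0: "0 \<le> r'" using assms by linarith
  have "arr (A0 uu r') \<le> r" using A0_char[OF assms(1) rH, of "A0 uu r'"] \<open>A0 uu r' < A0 uu r\<close> by blast
  then have "arr (A0 uu r') \<le> r'" using assms by linarith
  then have "A0 uu r' < A0 uu r'" using A0_char[OF r'0 assms(3), of "A0 uu r'"] by blast
  then show False by simp
qed

lemma wk_mono:
  assumes "0 \<le> r" "r \<le> r'" "r' \<le> H" shows "wk l r \<le> wk l r'"
  unfolding wk_def using A_mono[OF assms]
  by (intro sum_mono2) (auto simp: less_imp_le[OF vv_pos])

lemma wk_nn: "0 \<le> wk l r"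
  unfolding wk_def by (intro sum_nonneg) (auto simp: less_imp_le[OF vv_pos])

lemma cw_le_wk:
  assumes "i < A0 uu r" "yh i = l" shows "cumwork vv yh l i \<le> wk l r"
  unfolding wk_def cumwork_def using assms
  by (intro sum_mono2) (auto simp: less_imp_le[OF vv_pos])

lemma cw_mono: "i \<le> i' \<Longrightarrow> cumwork vv yh l i \<le> cumwork vv yh l i'"
  unfolding cumwork_def
  by (intro sum_mono2) (auto simp: less_imp_le[OF vv_pos])

lemma cw_strict: "i < i' \<Longrightarrow> yh i' = l \<Longrightarrow> cumwork vv yh l i < cumwork vv yh l i'"
proof -
  assume a: "i < i'" "yh i' = l"
  have "cumwork vv yh l i' = cumwork vv yh l i + (\<Sum>j\<in>{j. i < j \<and> j \<le> i' \<and> yh j = l}. vv j)"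
  proof -
    have e: "{j. j \<le> i' \<and> yh j = l} = {j. j \<le> i \<and> yh j = l} \<union> {j. i < j \<and> j \<le> i' \<and> yh j = l}"
      using a by auto
    show ?thesis unfolding cumwork_def e
      by (rule sum.union_disjoint) auto
  qed
  moreover have "0 < (\<Sum>j\<in>{j. i < j \<and> j \<le> i' \<and> yh j = l}. vv j)"
    using a by (intro sum_pos) (auto simp: vv_pos)
  ultimately show ?thesis by simp
qed

lemma wk_eq_cw:
  assumes "{j. j < A0 uu r \<and> yh j = l} \<noteq> {}"
  shows "wk l r = cumwork vv yh l (Max {j. j < A0 uu r \<and> yh j = l})"
proof -
  let ?S = "{j. j < A0 uu r \<and> yh j = l}"
  have fin: "finite ?S" by simp
  have M: "Max ?S \<in> ?S" using Max_in[OF fin assms] .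
  have "{j. j \<le> Max ?S \<and> yh j = l} = ?S"
    using M Max_ge[OF fin] by auto
  then show ?thesis unfolding wk_def cumwork_def by simp
qed

lemma VA_split: "VA r = (\<Sum>l<K. wk l r)"
proof -
  have "yh ` {..<A0 uu r} \<subseteq> {..<K}" using yh_lt by auto
  then show ?thesis using sum.group[of "{..<A0 uu r}" "{..<K}" yh vv] unfolding VA_def wk_def
    by simp
qed


definition LS :: "nat \<Rightarrow> real set" where "LS l = {r. cc r = Some l}"

lemma LS_sets: "LS l \<in> sets lebesgue"
  using wc unfolding wc_pfcfs_policy_def LS_def by auto

lemma alloc_eq: "alloc cc l s = measure lebesgue ({0..s} \<inter> LS l)"
  unfolding alloc_def LS_def by (rule arg_cong[where f="measure lebesgue"]) auto

lemma fm_Icc_int: "{a..b::real} \<inter> LS l \<in> lmeasurable"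
  by (rule fmeasurableI2[of "{a..b}"]) (auto intro!: sets.Int LS_sets)

lemma fm_Ioc_int: "{a<..b::real} \<inter> LS l \<in> lmeasurable"
  by (rule fmeasurableI2[of "{a..b}"]) (auto intro!: sets.Int LS_sets)

lemma alloc_split:
  assumes "0 \<le> a" "a \<le> b"
  shows "alloc cc l b = alloc cc l a + measure lebesgue ({a<..b} \<inter> LS l)"
proof -
  have e: "{0..b} \<inter> LS l = ({0..a} \<inter> LS l) \<union> ({a<..b} \<inter> LS l)" using assms by auto
  show ?thesis unfolding alloc_eq e
    by (rule measure_Union) (use fm_Icc_int[of 0 a l] fm_Ioc_int[of a b l] in \<open>auto simp: fmeasurable_def\<close>)
qed

lemma meas_int_le: "a \<le> b \<Longrightarrow> measure lebesgue ({a<..b} \<inter> LS l) \<le> b - a"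
proof -
  assume "a \<le> b"
  have "measure lebesgue ({a<..b} \<inter> LS l) \<le> measure lebesgue {a<..b}"
    by (rule measure_mono_fmeasurable) (use fm_Ioc_int[of a b l] lm_Ioc[of a b] in \<open>auto simp: fmeasurable_def\<close>)
  then show ?thesis using \<open>a \<le> b\<close> by simp
qed

lemma alloc_nn: "0 \<le> alloc cc l s"
  unfolding alloc_def by (rule measure_nonneg)

lemma alloc_mono: "0 \<le> a \<Longrightarrow> a \<le> b \<Longrightarrow> alloc cc l a \<le> alloc cc l b"
  using alloc_split[of a b l] measure_nonneg[of lebesgue "{a<..b} \<inter> LS l"] by linarith

lemma alloc_lip: "0 \<le> a \<Longrightarrow> a \<le> b \<Longrightarrow> alloc cc l b \<le> alloc cc l a + (b - a)"
  using alloc_split[of a b l] meas_int_le[of a b l] by linarith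

lemma alloc_0: "alloc cc l 0 = 0"
proof -
  have "measure lebesgue ({0..0} \<inter> LS l) \<le> measure lebesgue {0..(0::real)}"
    by (rule measure_mono_fmeasurable) (use fm_Icc_int[of 0 0 l] in \<open>auto simp: fmeasurable_def\<close>)
  then have "alloc cc l 0 \<le> 0" unfolding alloc_eq by simp
  with alloc_nn[of l 0] show ?thesis by linarith
qed

lemma alloc_const:
  assumes "0 \<le> a" "a \<le> b" "\<forall>r. a < r \<and> r \<le> b \<longrightarrow> cc r \<noteq> Some l"
  shows "alloc cc l b = alloc cc l a"
proof -
  have "{a<..b} \<inter> LS l = {}" using assms(3) by (auto simp: LS_def)
  then show ?thesis using alloc_split[OF assms(1,2), of l] by simp
qed

lemma wc_some: "0 \<le> r \<Longrightarrow> r \<le> H \<Longrightarrow> cc r = Some l \<Longrightarrow> l < K \<and> 0 < Nl K uu vv yy yh cc l r"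
  using wc unfolding wc_pfcfs_policy_def by auto

lemma wc_none: "0 \<le> r \<Longrightarrow> r \<le> H \<Longrightarrow> cc r = None \<Longrightarrow> (\<Sum>l<K. Nl K uu vv yy yh cc l r) = 0"
  using wc unfolding wc_pfcfs_policy_def by auto

lemma Al_busy:
  assumes "0 \<le> a" "a \<le> b" "b \<le> H" "\<forall>r. a < r \<and> r \<le> b \<longrightarrow> cc r \<noteq> None"
  shows "Al b = Al a + (b - a)"
proof -
  have 1: "Al b = Al a + (\<Sum>l<K. measure lebesgue ({a<..b} \<inter> LS l))"
    unfolding Al_def using alloc_split[OF assms(1,2)] by (simp add: sum.distrib)
  have 2: "(\<Sum>l<K. measure lebesgue ({a<..b} \<inter> LS l)) = measure lebesgue (\<Union>l<K. {a<..b} \<inter> LS l)"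
  proof (rule measure_finite_Union[symmetric])
    show "disjoint_family_on (\<lambda>l. {a<..b} \<inter> LS l) {..<K}"
      by (auto simp: disjoint_family_on_def LS_def)
    show "emeasure lebesgue ({a<..b} \<inter> LS l) \<noteq> \<infinity>" for l
      by (simp add: emeasure_eq_measure2[OF fm_Ioc_int])
    show "(\<lambda>l. {a<..b} \<inter> LS l) ` {..<K} \<subseteq> sets lebesgue"
      using fm_Ioc_int[of a b] by (auto dest: fmeasurableD)
  qed simp
  have 3: "(\<Union>l<K. {a<..b} \<inter> LS l) = {a<..b}"
  proof
    show "{a<..b} \<subseteq> (\<Union>l<K. {a<..b} \<inter> LS l)"
    proof
      fix r assume r: "r \<in> {a<..b}"
      then obtain l where l: "cc r = Some l" using assms(4) by fastforce
      then have "l < K" using wc_some[of r l] r assms by auto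
      with l r show "r \<in> (\<Union>l<K. {a<..b} \<inter> LS l)" by (auto simp: LS_def)
    qed
  qed auto
  show ?thesis using 1 2 3 assms by simp
qed

lemma Nl_pos_ex:
  assumes "0 < Nl K uu vv yy yh cc l r"
  shows "\<exists>i. i < A0 uu r \<and> yh i = l \<and> \<not> cumwork vv yh l i \<le> alloc cc l r"
proof (rule ccontr)
  assume a: "\<not> ?thesis"
  have "Nkl uu vv yy yh cc k l r = 0" for k
  proof -
    have "{i. i < A0 uu r \<and> yy i = k \<and> yh i = l \<and> \<not> cumwork vv yh l i \<le> alloc cc l r} = {}"
      using a by auto
    then show ?thesis unfolding Nkl_def by simp
  qed
  then have "Nl K uu vv yy yh cc l r = 0" unfolding Nl_def by simp
  with assms show False by simp
qed

lemma Nl_zero: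
  assumes "Nl K uu vv yy yh cc l r = 0" "i < A0 uu r" "yh i = l"
  shows "cumwork vv yh l i \<le> alloc cc l r"
proof -
  have "Nkl uu vv yy yh cc (yy i) l r = 0"
    using assms(1) yy_lt[of i] unfolding Nl_def by simp
  then have "{j. j < A0 uu r \<and> yy j = yy i \<and> yh j = l \<and> \<not> cumwork vv yh l j \<le> alloc cc l r} = {}"
    unfolding Nkl_def by simp
  with assms show ?thesis by blast
qed

lemma wk_le_alloc_idle:
  assumes "Nl K uu vv yy yh cc l r = 0" shows "wk l r \<le> alloc cc l r"
proof (cases "{j. j < A0 uu r \<and> yh j = l} = {}")
  case True
  have "wk l r = 0" unfolding wk_def True by simp
  then show ?thesis using alloc_nn[of l r] by simp
next
  case False
  let ?S = "{j. j < A0 uu r \<and> yh j = l}"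
  have "Max ?S \<in> ?S" using Max_in[OF _ False] by simp
  then show ?thesis using wk_eq_cw[OF False] Nl_zero[OF assms] by simp
qed

lemma F1:
  assumes "0 \<le> s" "s \<le> H" shows "alloc cc l s \<le> wk l s"
proof (rule ccontr)
  assume "\<not> ?thesis"
  hence gt: "wk l s < alloc cc l s" by simp
  define E where "E = {r. 0 \<le> r \<and> r \<le> s \<and> alloc cc l r \<le> wk l r}"
  have E0: "0 \<in> E" unfolding E_def using assms alloc_0 wk_nn by auto
  have bddE: "bdd_above E" unfolding E_def by (rule bdd_aboveI[of _ s]) auto
  define r1 where "r1 = Sup E"
  have r1_ge0: "0 \<le> r1" unfolding r1_def using cSup_upper[OF E0 bddE] .
  have r1_le: "r1 \<le> s" unfolding r1_def by (rule cSup_least) (use E0 in \<open>auto simp: E_def\<close>)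
  have notE: "\<forall>r. r1 < r \<and> r \<le> s \<longrightarrow> cc r \<noteq> Some l"
  proof (intro allI impI)
    fix r assume r: "r1 < r \<and> r \<le> s"
    have "r \<notin> E" using r cSup_upper[OF _ bddE, of r] unfolding r1_def by force
    hence lt: "wk l r < alloc cc l r" using r r1_ge0 by (auto simp: E_def)
    show "cc r \<noteq> Some l"
    proof
      assume "cc r = Some l"
      then have "0 < Nl K uu vv yy yh cc l r" using wc_some[of r l] r r1_ge0 assms by auto
      then obtain i where "i < A0 uu r" "yh i = l" "\<not> cumwork vv yh l i \<le> alloc cc l r"
        using Nl_pos_ex by blast
      with cw_le_wk[of i r l] lt show False by linarith
    qed
  qed
  have eq: "alloc cc l s = alloc cc l r1" by (rule alloc_const[OF r1_ge0 r1_le notE])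
  define \<eta> where "\<eta> = (alloc cc l s - wk l s) / 2"
  have eta: "0 < \<eta>" using gt unfolding \<eta>_def by simp
  have "r1 - \<eta> < Sup E" using eta unfolding r1_def by simp
  then obtain r where r: "r \<in> E" "r1 - \<eta> < r" using less_cSupE[of "r1 - \<eta>" E] E0 by blast
  have rle: "r \<le> r1" unfolding r1_def using cSup_upper[OF r(1) bddE] .
  have r0: "0 \<le> r" "r \<le> s" "alloc cc l r \<le> wk l r" using r(1) by (auto simp: E_def)
  have "alloc cc l r1 \<le> alloc cc l r + (r1 - r)" by (rule alloc_lip[OF r0(1) rle])
  moreover have "wk l r \<le> wk l s" by (rule wk_mono[OF r0(1) r0(2) assms(2)])
  ultimately have "alloc cc l s \<le> wk l s + \<eta>" using eq r(2) r0(3) by linarith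
  then show False using eta gt unfolding \<eta>_def by (simp add: field_simps)
qed

lemma Al_mono: "0 \<le> a \<Longrightarrow> a \<le> b \<Longrightarrow> Al a \<le> Al b"
  unfolding Al_def by (intro sum_mono alloc_mono) auto

lemma Al_0: "Al 0 = 0" unfolding Al_def using alloc_0 by simp

lemma work_bound:
  assumes "0 \<le> s" "s \<le> H"
  shows "\<exists>r'. 0 \<le> r' \<and> r' \<le> s \<and> VA s - Al s \<le> \<bar>VA s - s\<bar> + \<bar>VA r' - r'\<bar> + 1"
proof (cases "\<forall>r. 0 < r \<and> r \<le> s \<longrightarrow> cc r \<noteq> None")
  case True
  have "Al s = Al 0 + (s - 0)" by (rule Al_busy) (use assms True in auto)
  then have "VA s - Al s = VA s - s" using Al_0 by simp
  then show ?thesis using assms by (intro exI[of _ 0]) auto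
next
  case False
  define I where "I = {r. 0 \<le> r \<and> r \<le> s \<and> cc r = None}"
  from False obtain r0 where "0 < r0" "r0 \<le> s" "cc r0 = None" by auto
  then have r0: "r0 \<in> I" unfolding I_def by simp
  have bddI: "bdd_above I" unfolding I_def by (rule bdd_aboveI[of _ s]) auto
  define rs where "rs = Sup I"
  have rs_le: "rs \<le> s" unfolding rs_def by (rule cSup_least) (use r0 in \<open>auto simp: I_def\<close>)
  have "rs - 1 < Sup I" unfolding rs_def by simp
  then obtain r' where r': "r' \<in> I" "rs - 1 < r'" using less_cSupE[of "rs - 1" I] r0 by blast
  have r'le: "r' \<le> rs" unfolding rs_def using cSup_upper[OF r'(1) bddI] .
  have r'0: "0 \<le> r'" "r' \<le> s" "cc r' = None" using r'(1) by (auto simp: I_def)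
  have busy: "\<forall>r. rs < r \<and> r \<le> s \<longrightarrow> cc r \<noteq> None"
  proof (intro allI impI)
    fix r assume r: "rs < r \<and> r \<le> s"
    show "cc r \<noteq> None"
    proof
      assume "cc r = None"
      then have "r \<in> I" using r r'0 r'le unfolding I_def by auto
      then have "r \<le> rs" unfolding rs_def using cSup_upper[OF _ bddI] by blast
      with r show False by simp
    qed
  qed
  have Als: "Al s = Al rs + (s - rs)" by (rule Al_busy) (use busy rs_le r'0 r'le assms in auto)
  have sum0: "(\<Sum>l<K. Nl K uu vv yy yh cc l r') = 0" by (rule wc_none) (use r'0 assms in auto)
  have "VA r' \<le> Al r'"
    unfolding VA_split Al_def
  proof (rule sum_mono)
    fix l assume "l \<in> {..<K}"
    then have "Nl K uu vv yy yh cc l r' = 0" using sum0 by simp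
    then show "wk l r' \<le> alloc cc l r'" by (rule wk_le_alloc_idle)
  qed
  moreover have "Al r' \<le> Al rs" by (rule Al_mono) (use r'0 r'le in auto)
  ultimately have "VA s - Al s \<le> (VA s - s) - (VA r' - r') + 1" using Als r'(2) by linarith
  then show ?thesis using r'0 by (intro exI[of _ r']) auto
qed

lemma present:
  assumes "0 \<le> s" "s \<le> H" "0 < Nl K uu vv yy yh cc l s"
  shows "\<exists>m0. m0 < A0 uu s \<and> arr m0 \<le> s \<and> m0 < A0 uu (arr m0)
     \<and> (\<forall>t'. 0 \<le> t' \<and> t' < arr m0 \<longrightarrow> A0 uu t' \<le> m0)
     \<and> (\<forall>k. Nkl uu vv yy yh cc k l s = card {i. m0 \<le> i \<and> i < A0 uu s \<and> yy i = k \<and> yh i = l})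
     \<and> wk l s - wk l (arr m0) \<le> VA s - Al s"
proof -
  define P where "P = {i. i < A0 uu s \<and> yh i = l \<and> \<not> cumwork vv yh l i \<le> alloc cc l s}"
  have Pne: "P \<noteq> {}" using Nl_pos_ex[OF assms(3)] unfolding P_def by blast
  have Pfin: "finite P" unfolding P_def by simp
  define m0 where "m0 = Min P"
  have m0P: "m0 \<in> P" unfolding m0_def using Min_in[OF Pfin Pne] .
  have m0le: "m0 \<le> i" if "i \<in> P" for i unfolding m0_def using Min_le[OF Pfin that] .
  have m0A: "m0 < A0 uu s" and m0l: "yh m0 = l" and m0cw: "alloc cc l s < cumwork vv yh l m0"
    using m0P unfolding P_def by auto
  have intv: "i \<in> P" if "m0 \<le> i" "i < A0 uu s" "yh i = l" for i
    using cw_mono[OF that(1), of l] m0cw that unfolding P_def by auto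
  have arr_le: "arr m0 \<le> s" using A0_char[OF assms(1,2)] m0A by simp
  have arrH: "arr m0 \<le> H" using arr_le assms by simp
  have m0A': "m0 < A0 uu (arr m0)" using A0_char[OF arr_nn arrH] by simp
  have before: "\<forall>t'. 0 \<le> t' \<and> t' < arr m0 \<longrightarrow> A0 uu t' \<le> m0"
  proof (intro allI impI)
    fix t' assume t': "0 \<le> t' \<and> t' < arr m0"
    show "A0 uu t' \<le> m0"
    proof (rule ccontr)
      assume "\<not> A0 uu t' \<le> m0"
      then have "m0 < A0 uu t'" by simp
      then have "arr m0 \<le> t'" using A0_char[of t' m0] t' arrH by auto
      with t' show False by simp
    qed
  qed
  have Nk: "Nkl uu vv yy yh cc k l s = card {i. m0 \<le> i \<and> i < A0 uu s \<and> yy i = k \<and> yh i = l}" for k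
  proof -
    have "{i. i < A0 uu s \<and> yy i = k \<and> yh i = l \<and> \<not> cumwork vv yh l i \<le> alloc cc l s}
        = {i. m0 \<le> i \<and> i < A0 uu s \<and> yy i = k \<and> yh i = l}"
      using intv m0le unfolding P_def by auto
    then show ?thesis unfolding Nkl_def by simp
  qed
  have lK: "l < K" using yh_lt[of m0] m0l by simp
  have "cumwork vv yh l m0 \<le> wk l (arr m0)" by (rule cw_le_wk[OF m0A' m0l])
  then have w1: "wk l s - wk l (arr m0) < wk l s - alloc cc l s" using m0cw by linarith
  have "wk l s - alloc cc l s \<le> (\<Sum>l'<K. wk l' s - alloc cc l' s)"
    by (rule member_le_sum) (use lK F1[OF assms(1,2)] in auto)
  also have "\<dots> = VA s - Al s" unfolding VA_split Al_def by (simp add: sum_subtractf)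
  finally have "wk l s - wk l (arr m0) \<le> VA s - Al s" using w1 by linarith
  then show ?thesis using m0A arr_le m0A' before Nk by blast
qed

end



lemma sqrt_at_top_seq: "filterlim (\<lambda>n::nat. sqrt (real n)) at_top sequentially"
  by (rule filterlim_compose[OF sqrt_at_top filterlim_real_sequentially])

lemma inv_sqrt_0: "(\<lambda>n::nat. 1 / sqrt (real n)) \<longlonglongrightarrow> 0"
  using tendsto_inverse_0_at_top[OF sqrt_at_top_seq] by (simp add: inverse_eq_divide)

lemma rate_conv:
  assumes "(\<lambda>n. sqrt (real n) * (a n - (a0::real))) \<longlonglongrightarrow> 0" shows "a \<longlonglongrightarrow> a0"
proof -
  have "(\<lambda>n. sqrt (real n) * (a n - a0) * (1 / sqrt (real n))) \<longlonglongrightarrow> 0 * 0"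
    by (intro tendsto_mult assms inv_sqrt_0)
  moreover have "eventually (\<lambda>n. sqrt (real n) * (a n - a0) * (1 / sqrt (real n)) = a n - a0) sequentially"
    using eventually_gt_at_top[of 0] by eventually_elim simp
  ultimately have "(\<lambda>n. a n - a0) \<longlonglongrightarrow> 0" using Lim_transform_eventually by fastforce
  then show ?thesis by (rule LIM_zero_cancel)
qed

lemma rate_prod:
  assumes a: "(\<lambda>n. sqrt (real n) * (a n - (a0::real))) \<longlonglongrightarrow> 0"
    and b: "(\<lambda>n. sqrt (real n) * (b n - (b0::real))) \<longlonglongrightarrow> 0"
  shows "(\<lambda>n. sqrt (real n) * (a n * b n - a0 * b0)) \<longlonglongrightarrow> 0"
proof -
  have "(\<lambda>n. sqrt (real n) * (a n - a0) * b n + a0 * (sqrt (real n) * (b n - b0))) \<longlonglongrightarrow> 0 * b0 + a0 * 0"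
    by (intro tendsto_intros a b rate_conv[OF b])
  moreover have "(\<lambda>n. sqrt (real n) * (a n - a0) * b n + a0 * (sqrt (real n) * (b n - b0)))
      = (\<lambda>n. sqrt (real n) * (a n * b n - a0 * b0))"
    by (rule ext) (simp add: algebra_simps)
  ultimately show ?thesis by simp
qed

lemma rate_sum:
  assumes "\<And>k. k \<in> I \<Longrightarrow> (\<lambda>n. sqrt (real n) * (a n k - (a0 k::real))) \<longlonglongrightarrow> 0"
  shows "(\<lambda>n. sqrt (real n) * ((\<Sum>k\<in>I. a n k) - (\<Sum>k\<in>I. a0 k))) \<longlonglongrightarrow> 0"
proof -
  have "(\<lambda>n. \<Sum>k\<in>I. sqrt (real n) * (a n k - a0 k)) \<longlonglongrightarrow> 0"
    by (rule tendsto_null_sum) (use assms in auto)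
  moreover have "(\<lambda>n. \<Sum>k\<in>I. sqrt (real n) * (a n k - a0 k)) = (\<lambda>n. sqrt (real n) * ((\<Sum>k\<in>I. a n k) - (\<Sum>k\<in>I. a0 k)))"
    by (rule ext) (simp add: sum_distrib_left sum_subtractf right_diff_distrib)
  ultimately show ?thesis by simp
qed

lemma rate_inv:
  assumes a: "(\<lambda>n. sqrt (real n) * (a n - (a0::real))) \<longlonglongrightarrow> 0" and nz: "a0 \<noteq> 0"
  shows "(\<lambda>n. sqrt (real n) * (1 / a n - 1 / a0)) \<longlonglongrightarrow> 0"
proof -
  have ac: "a \<longlonglongrightarrow> a0" by (rule rate_conv[OF a])
  have "(\<lambda>n. - (sqrt (real n) * (a n - a0)) / (a n * a0)) \<longlonglongrightarrow> - 0 / (a0 * a0)"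
    by (intro tendsto_intros a ac) (use nz in simp)
  moreover have "eventually (\<lambda>n. - (sqrt (real n) * (a n - a0)) / (a n * a0) = sqrt (real n) * (1 / a n - 1 / a0)) sequentially"
    using tendsto_imp_eventually_ne[OF ac nz] by eventually_elim (use nz in \<open>simp add: field_simps\<close>)
  ultimately show ?thesis using Lim_transform_eventually by fastforce
qed

lemma unif_bound:
  fixes F :: "nat \<Rightarrow> real \<Rightarrow> real"
  assumes conv: "\<forall>\<epsilon>>0. eventually (\<lambda>n. \<forall>t\<in>{0..1}. \<bar>F n t - G t\<bar> \<le> \<epsilon>) sequentially"
    and cont: "continuous_on {0..1} G"
  shows "\<exists>C. eventually (\<lambda>n. \<forall>t\<in>{0..1}. \<bar>F n t\<bar> \<le> C) sequentially"
proof -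
  have "bounded (G ` {0..1})"
    by (rule compact_imp_bounded[OF compact_continuous_image[OF cont compact_Icc]])
  then obtain C where C0: "\<forall>x\<in>G ` {0..1}. norm x \<le> C" unfolding bounded_iff by (elim exE) simp
  have C: "\<bar>G t\<bar> \<le> C" if "t \<in> {0..1}" for t using C0 that by auto
  have "eventually (\<lambda>n. \<forall>t\<in>{0..1}. \<bar>F n t - G t\<bar> \<le> 1) sequentially" using conv by simp
  then have "eventually (\<lambda>n. \<forall>t\<in>{0..1}. \<bar>F n t\<bar> \<le> C + 1) sequentially"
  proof eventually_elim
    case (elim n)
    show ?case
    proof
      fix t :: real assume t: "t \<in> {0..1}"
      have "\<bar>F n t - G t\<bar> \<le> 1" using elim t by blast
      then show "\<bar>F n t\<bar> \<le> C + 1" using C[OF t] by linarith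
    qed
  qed
  then show ?thesis by blast
qed

lemma unif_equi:
  fixes F :: "nat \<Rightarrow> real \<Rightarrow> real"
  assumes conv: "\<forall>\<epsilon>>0. eventually (\<lambda>n. \<forall>t\<in>{0..1}. \<bar>F n t - G t\<bar> \<le> \<epsilon>) sequentially"
    and cont: "continuous_on {0..1} G" and e: "0 < \<epsilon>"
  shows "\<exists>\<delta>>0. eventually (\<lambda>n. \<forall>t\<in>{0..1}. \<forall>t'\<in>{0..1}. \<bar>t - t'\<bar> \<le> \<delta> \<longrightarrow> \<bar>F n t - F n t'\<bar> \<le> \<epsilon>) sequentially"
proof -
  have uc: "uniformly_continuous_on {0..1} G" by (rule compact_uniformly_continuous[OF cont compact_Icc])
  obtain d where d: "d > 0" "\<forall>x\<in>{0..1}. \<forall>x'\<in>{0..1}. dist x' x < d \<longrightarrow> dist (G x') (G x) < \<epsilon> / 3"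
  proof -
    have ucd: "\<forall>e>0. \<exists>d>0. \<forall>x\<in>{0..1}. \<forall>x'\<in>{0..1}. dist x' x < d \<longrightarrow> dist (G x') (G x) < e"
      using uc unfolding uniformly_continuous_on_def .
    have e3: "\<epsilon> / 3 > 0" using e by simp
    from mp[OF spec[OF ucd, of "\<epsilon> / 3"] e3] show ?thesis using that by blast
  qed
  have ev: "eventually (\<lambda>n. \<forall>t\<in>{0..1}. \<bar>F n t - G t\<bar> \<le> \<epsilon> / 3) sequentially"
    by (rule conv[rule_format]) (use e in simp)
  have "eventually (\<lambda>n. \<forall>t\<in>{0..1}. \<forall>t'\<in>{0..1}. \<bar>t - t'\<bar> \<le> d / 2 \<longrightarrow> \<bar>F n t - F n t'\<bar> \<le> \<epsilon>) sequentially"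
    using ev
  proof eventually_elim
    case (elim n)
    show ?case
    proof (intro ballI impI)
      fix t t' :: real assume t: "t \<in> {0..1}" "t' \<in> {0..1}" "\<bar>t - t'\<bar> \<le> d / 2"
      have "dist t t' < d" using t(3) d(1) by (simp add: dist_real_def)
      then have "\<bar>G t - G t'\<bar> < \<epsilon> / 3" using d(2) t(1,2) by (auto simp: dist_real_def)
      moreover have "\<bar>F n t - G t\<bar> \<le> \<epsilon> / 3" "\<bar>F n t' - G t'\<bar> \<le> \<epsilon> / 3" using elim t by auto
      ultimately show "\<bar>F n t - F n t'\<bar> \<le> \<epsilon>" by linarith
    qed
  qed
  then show ?thesis using d(1) by (intro exI[of _ "d/2"]) auto
qed



locale pw =
  fixes M :: "'w measure" and K :: nat and u v :: "nat \<Rightarrow> nat \<Rightarrow> 'w \<Rightarrow> real"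
    and X :: "nat \<Rightarrow> nat \<Rightarrow> 'w \<Rightarrow> 'x::euclidean_space" and Y :: "nat \<Rightarrow> nat \<Rightarrow> 'w \<Rightarrow> nat"
    and f :: "'x \<Rightarrow> nat" and c :: "nat \<Rightarrow> 'w \<Rightarrow> real \<Rightarrow> nat option" and w :: 'w
    and B :: "real \<Rightarrow> 'w \<Rightarrow> prim \<Rightarrow> real"
begin

abbreviation "Ph n t i \<equiv> prim_hat M u v X Y f n w t i"
abbreviation "lamn n \<equiv> lam_n M u n"
abbreviation "pn n k \<equiv> p_n M Y n k"
abbreviation "qn n k l \<equiv> q_n M X Y f n k l"
abbreviation "en n k \<equiv> 1 / mu_n M v Y n k"
abbreviation "Cn n k l m \<equiv> card {j. j < m \<and> Y n j w = k \<and> f (X n j w) = l}"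

lemma ph_PA:
  assumes "1 \<le> n"
  shows "real (A0 (\<lambda>i. u n i w) r) = sqrt (real n) * Ph n (r / real n) PA + lamn n * r"
proof -
  have e: "real n * (r / real n) = r" using assms by simp
  have s: "sqrt (real n) > 0" using assms by simp
  show ?thesis unfolding prim_hat_def Let_def e using s by (simp add: field_simps)
qed

lemma ph_PC:
  assumes "1 \<le> n"
  shows "real (Cn n k l (A0 (\<lambda>i. u n i w) r))
     = sqrt (real n) * Ph n (r / real n) (PC k l) + pn n k * qn n k l * real (A0 (\<lambda>i. u n i w) r)"
proof -
  have e: "real n * (r / real n) = r" using assms by simp
  have s: "sqrt (real n) > 0" using assms by simp
  show ?thesis unfolding prim_hat_def Let_def e using s by (simp add: field_simps)
qed

lemma ph_PV:
  assumes "1 \<le> n"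
  shows "(\<Sum>j\<in>{j. j < A0 (\<lambda>i. u n i w) r \<and> Y n j w = k \<and> f (X n j w) = l}. v n j w)
     = sqrt (real n) * Ph n (r / real n) (PV k l) + en n k * real (Cn n k l (A0 (\<lambda>i. u n i w) r))"
proof -
  have e: "real n * (r / real n) = r" using assms by simp
  have s: "sqrt (real n) > 0" using assms by simp
  show ?thesis unfolding prim_hat_def Let_def e using s
    by (simp add: field_simps sum_subtractf)
qed

end



lemma card_split:
  assumes "m \<le> (m'::nat)"
  shows "real (card {i. m \<le> i \<and> i < m' \<and> Q i}) = real (card {i. i < m' \<and> Q i}) - real (card {i. i < m \<and> Q i})"
proof -
  have e: "{i. i < m' \<and> Q i} = {i. i < m \<and> Q i} \<union> {i. m \<le> i \<and> i < m' \<and> Q i}" using assms by auto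
  have "card {i. i < m' \<and> Q i} = card {i. i < m \<and> Q i} + card {i. m \<le> i \<and> i < m' \<and> Q i}"
    unfolding e by (rule card_Un_disjoint) auto
  then show ?thesis by simp
qed

lemma card_classes:
  assumes "\<And>i. yy i < (K::nat)"
  shows "(\<Sum>k<K. card {i. m \<le> i \<and> i < (m'::nat) \<and> yy i = k \<and> P i}) = card {i. m \<le> i \<and> i < m' \<and> P i}"
proof -
  let ?S = "{i. m \<le> i \<and> i < m' \<and> P i}"
  have fin: "finite ?S" by simp
  have sub: "yy ` ?S \<subseteq> {..<K}" using assms by auto
  have "(\<Sum>k<K. \<Sum>i\<in>{x. x \<in> ?S \<and> yy x = k}. (1::nat)) = (\<Sum>i\<in>?S. 1)"
    by (rule sum.group[OF fin _ sub]) simp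
  moreover have "{x. x \<in> ?S \<and> yy x = k} = {i. m \<le> i \<and> i < m' \<and> yy i = k \<and> P i}" for k by auto
  ultimately show ?thesis by simp
qed

lemma card_lip:
  assumes yy: "\<And>i. yy i < (K::nat)" and r: "0 \<le> r" "r \<le> (1::real)" and mm: "m \<le> (m'::nat)"
  shows "\<bar>real (card {i. m \<le> i \<and> i < m' \<and> yy i = k \<and> P i})
           - r * (\<Sum>k'<K. real (card {i. m \<le> i \<and> i < m' \<and> yy i = k' \<and> P i}))\<bar> \<le> real m' - real m"
proof -
  define c1 where "c1 = card {i. m \<le> i \<and> i < m' \<and> yy i = k \<and> P i}"
  define c2 where "c2 = card {i. m \<le> i \<and> i < m' \<and> P i}"
  have s2: "(\<Sum>k'<K. real (card {i. m \<le> i \<and> i < m' \<and> yy i = k' \<and> P i})) = real c2"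
    unfolding c2_def using card_classes[of yy K m m' P, OF yy] by (simp flip: of_nat_sum)
  have "c1 \<le> c2" unfolding c1_def c2_def by (rule card_mono) auto
  moreover have "c2 \<le> card {m..<m'}" unfolding c2_def by (rule card_mono) auto
  ultimately have "real c1 \<le> real c2" "real c2 \<le> real m' - real m" using mm by auto
  moreover have "r * real c2 \<le> real c2" using r by (intro mult_left_le_one_le) auto
  moreover have "0 \<le> r * real c2" using r by simp
  ultimately show ?thesis unfolding s2 c1_def[symmetric] by linarith
qed


lemma alg1: "(a - r * b) - (c - r * d) = (a - c) - r * (b - (d::real))"
  by (simp add: algebra_simps)

context pw
begin

lemma Prim_mem: "PA \<in> Prim K" "k < K \<Longrightarrow> l < K \<Longrightarrow> PC k l \<in> Prim K" "k < K \<Longrightarrow> l < K \<Longrightarrow> PV k l \<in> Prim K"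
  unfolding Prim_def by auto

lemma step_n:
  fixes n k l :: nat and \<epsilon> \<epsilon>' \<delta> Cb Z CQ lam clb :: real
  assumes n1: "1 \<le> n" and kK: "k < K" and lK: "l < K"
  and frange: "\<forall>x. f x < K"
  and model: "\<forall>i. 0 \<le> u n i w \<and> 0 < v n i w \<and> Y n i w < K"
  and pol: "wc_pfcfs_policy K (real n) (\<lambda>i. u n i w) (\<lambda>i. v n i w) (\<lambda>i. Y n i w) (\<lambda>i. f (X n i w)) (c n w)"
  and bnd: "\<exists>m. real n < (\<Sum>i<m. u n i w)"
  and Cb: "\<forall>i\<in>Prim K. \<forall>t\<in>{0..1}. \<bar>Ph n t i\<bar> \<le> Cb"
  and equi: "\<forall>i\<in>Prim K. \<forall>t\<in>{0..1}. \<forall>t'\<in>{0..1}. \<bar>t - t'\<bar> \<le> \<delta> \<longrightarrow> \<bar>Ph n t i - Ph n t' i\<bar> \<le> \<epsilon>'"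
  and Ph0: "\<bar>Ph n 0 PA\<bar> \<le> \<epsilon>'"
  and Ze: "\<forall>k'<K. \<bar>en n k'\<bar> \<le> Z" and Zpq: "\<forall>k'<K. \<forall>l'<K. \<bar>pn n k' * qn n k' l'\<bar> \<le> Z"
  and CQ: "CQ = real K * (Cb + Z * Cb + Z * Z * Cb)"
  and pqsum: "\<forall>k'<K. (\<Sum>l'<K. pn n k' * qn n k' l') = pn n k'"
  and pnn: "\<forall>k'. 0 \<le> pn n k'" and qnn: "\<forall>k' l'. 0 \<le> qn n k' l'"
  and pqpos: "0 < (\<Sum>k'<K. pn n k' * qn n k' l)"
  and lam: "lam / 2 \<le> lamn n" "lamn n \<le> 2 * lam" "0 < lam"
  and cl: "clb / 2 \<le> (\<Sum>k'<K. en n k' * (pn n k' * qn n k' l))" "0 < clb"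
  and rho: "sqrt (real n) * \<bar>lamn n * (\<Sum>k'<K. pn n k' * en n k') - 1\<bar> \<le> 1"
  and small1: "4 * (2 * (real K * CQ + 1) + 1 + 2 * CQ) / (lam * clb) / sqrt (real n) \<le> \<delta>"
  and small2: "1 / real n \<le> \<delta>"
  and small3: "lam \<le> sqrt (real n) * \<epsilon>'"
  and eps: "(real K + 3) * \<epsilon>' \<le> \<epsilon>" "0 \<le> \<epsilon>'"
  shows "\<forall>t\<in>{0..1}.
     \<bar>real (Nkl (\<lambda>i. u n i w) (\<lambda>i. v n i w) (\<lambda>i. Y n i w) (\<lambda>i. f (X n i w)) (c n w) k l (real n * t))
        / sqrt (real n)
      - pn n k * qn n k l / (\<Sum>r<K. pn n r * qn n r l)
        * (real (Nl K (\<lambda>i. u n i w) (\<lambda>i. v n i w) (\<lambda>i. Y n i w) (\<lambda>i. f (X n i w)) (c n w) l (real n * t))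
           / sqrt (real n))\<bar> \<le> \<epsilon>"
proof
  fix t :: real assume t: "t \<in> {0..1}"
  define s where "s = real n * t"
  have s0: "0 \<le> s" "s \<le> real n" using t n1 unfolding s_def by (auto simp: mult_left_le)
  define sn where "sn = sqrt (real n)"
  have sn1: "1 \<le> sn" unfolding sn_def using n1 by simp
  have snsq: "sn * sn = real n" unfolding sn_def by simp
  interpret d: det K "real n" "\<lambda>i. u n i w" "\<lambda>i. v n i w" "\<lambda>i. Y n i w" "\<lambda>i. f (X n i w)" "c n w"
    by unfold_locales (use model frange bnd pol in auto)
  define A where "A x = A0 (\<lambda>i. u n i w) x" for x
  define den where "den = (\<Sum>r<K. pn n r * qn n r l)"
  define r where "r = pn n k * qn n k l / den"
  have den_pos: "0 < den" unfolding den_def using pqpos .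
  have num_le: "pn n k * qn n k l \<le> den" unfolding den_def
    by (rule member_le_sum) (use kK pnn qnn in auto)
  have r0: "0 \<le> r" unfolding r_def using den_pos pnn qnn by simp
  have r1: "r \<le> 1" unfolding r_def using den_pos num_le by simp
  have rden: "pn n k * qn n k l - r * den = 0" unfolding r_def using den_pos by simp
  have "\<bar>Ph n 0 PA\<bar> \<le> Cb" using Cb Prim_mem(1) by auto
  then have Cb0: "0 \<le> Cb" using abs_ge_zero[of "Ph n 0 PA"] by linarith
  have "\<bar>en n k\<bar> \<le> Z" using Ze kK by auto
  then have Z0: "0 \<le> Z" using abs_ge_zero[of "en n k"] by linarith
  define Ql where "Ql l' \<tau> = (\<Sum>k'<K. Ph n \<tau> (PV k' l') + en n k' * Ph n \<tau> (PC k' l')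
                     + en n k' * (pn n k' * qn n k' l') * Ph n \<tau> PA)" for l' \<tau>
  define cl where "cl l' = (\<Sum>k'<K. en n k' * (pn n k' * qn n k' l'))" for l'
  have wk_rep: "d.wk l' x = sn * Ql l' (x / real n) + lamn n * x * cl l'" for l' x
  proof -
    let ?S = "{j. j < A0 (\<lambda>i. u n i w) x \<and> f (X n j w) = l'}"
    have sub: "(\<lambda>j. Y n j w) ` ?S \<subseteq> {..<K}" using model by auto
    have "d.wk l' x = (\<Sum>k'<K. \<Sum>j\<in>{j. j \<in> ?S \<and> Y n j w = k'}. v n j w)"
      unfolding d.wk_def by (rule sum.group[symmetric]) (use sub in auto)
    also have "\<dots> = (\<Sum>k'<K. \<Sum>j\<in>{j. j < A0 (\<lambda>i. u n i w) x \<and> Y n j w = k' \<and> f (X n j w) = l'}. v n j w)"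
      by (intro sum.cong refl arg_cong[where f="\<lambda>S. sum _ S"]) auto
    also have "\<dots> = (\<Sum>k'<K. sn * Ph n (x / real n) (PV k' l') + en n k' *
          (sn * Ph n (x / real n) (PC k' l') + pn n k' * qn n k' l' *
            (sn * Ph n (x / real n) PA + lamn n * x)))"
      by (intro sum.cong refl) (simp add: ph_PV[OF n1] ph_PC[OF n1] ph_PA[OF n1] sn_def)
    also have "\<dots> = sn * Ql l' (x / real n) + lamn n * x * cl l'"
      unfolding Ql_def cl_def
      by (simp add: sum_distrib_left sum_distrib_right sum.distrib algebra_simps)
    finally show ?thesis .
  qed
  have Ql_bd: "\<bar>Ql l' \<tau>\<bar> \<le> CQ" if "l' < K" "\<tau> \<in> {0..1}" for l' \<tau>
  proof -
    have "\<bar>Ql l' \<tau>\<bar> \<le> (\<Sum>k'<K. Cb + Z * Cb + Z * Z * Cb)"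
      unfolding Ql_def
    proof (rule order_trans[OF sum_abs sum_mono])
      fix k' assume k': "k' \<in> {..<K}"
      have a1: "\<bar>Ph n \<tau> (PV k' l')\<bar> \<le> Cb" using Cb Prim_mem(3)[of k' l'] k' that by auto
      have a2: "\<bar>Ph n \<tau> (PC k' l')\<bar> \<le> Cb" using Cb Prim_mem(2)[of k' l'] k' that by auto
      have a3: "\<bar>Ph n \<tau> PA\<bar> \<le> Cb" using Cb Prim_mem(1) that by auto
      have e1: "\<bar>en n k'\<bar> \<le> Z" using Ze k' by auto
      have e2: "\<bar>pn n k' * qn n k' l'\<bar> \<le> Z" using Zpq k' that by auto
      have b2: "\<bar>en n k' * Ph n \<tau> (PC k' l')\<bar> \<le> Z * Cb"
        unfolding abs_mult by (rule mult_mono[OF e1 a2]) (use Z0 in auto)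
      have c1: "\<bar>en n k' * (pn n k' * qn n k' l')\<bar> \<le> Z * Z"
        using abs_mult[of "en n k'" "pn n k' * qn n k' l'"] mult_mono[OF e1 e2 Z0 abs_ge_zero] by simp
      have ZZ: "0 \<le> Z * Z" using Z0 by simp
      have b3: "\<bar>en n k' * (pn n k' * qn n k' l') * Ph n \<tau> PA\<bar> \<le> Z * Z * Cb"
        using abs_mult[of "en n k' * (pn n k' * qn n k' l')" "Ph n \<tau> PA"] mult_mono[OF c1 a3 ZZ abs_ge_zero]
        by linarith
      show "\<bar>Ph n \<tau> (PV k' l') + en n k' * Ph n \<tau> (PC k' l') + en n k' * (pn n k' * qn n k' l') * Ph n \<tau> PA\<bar>
          \<le> Cb + Z * Cb + Z * Z * Cb"
        using a1 b2 b3 abs_triangle_ineq[of "Ph n \<tau> (PV k' l') + en n k' * Ph n \<tau> (PC k' l')"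
            "en n k' * (pn n k' * qn n k' l') * Ph n \<tau> PA"]
          abs_triangle_ineq[of "Ph n \<tau> (PV k' l')" "en n k' * Ph n \<tau> (PC k' l')"] by linarith
    qed
    then show ?thesis unfolding CQ by simp
  qed
  have CQ0: "0 \<le> CQ" unfolding CQ using Cb0 Z0 by simp
  have sum_cl: "(\<Sum>l'<K. cl l') = (\<Sum>k'<K. pn n k' * en n k')"
  proof -
    have "(\<Sum>l'<K. cl l') = (\<Sum>l'<K. \<Sum>k'<K. en n k' * (pn n k' * qn n k' l'))"
      unfolding cl_def by simp
    also have "\<dots> = (\<Sum>k'<K. \<Sum>l'<K. en n k' * (pn n k' * qn n k' l'))" by (rule sum.swap)
    also have "\<dots> = (\<Sum>k'<K. en n k' * (\<Sum>l'<K. pn n k' * qn n k' l'))"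
      by (simp add: sum_distrib_left)
    also have "\<dots> = (\<Sum>k'<K. pn n k' * en n k')" using pqsum by (intro sum.cong) auto
    finally show ?thesis .
  qed
  have VA_rep: "d.VA x - x = sn * (\<Sum>l'<K. Ql l' (x / real n)) + x * (lamn n * (\<Sum>k'<K. pn n k' * en n k') - 1)" for x
  proof -
    have "d.VA x = (\<Sum>l'<K. sn * Ql l' (x / real n) + lamn n * x * cl l')"
      unfolding d.VA_split using wk_rep by simp
    also have "\<dots> = sn * (\<Sum>l'<K. Ql l' (x / real n)) + lamn n * x * (\<Sum>l'<K. cl l')"
      by (simp add: sum.distrib sum_distrib_left)
    finally show ?thesis unfolding sum_cl by (simp add: algebra_simps)
  qed
  have VA_bd: "\<bar>d.VA x - x\<bar> \<le> sn * (real K * CQ + 1)" if "0 \<le> x" "x \<le> real n" for x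
  proof -
    have "\<bar>\<Sum>l'<K. Ql l' (x / real n)\<bar> \<le> (\<Sum>l'<K. CQ)"
      by (rule order_trans[OF sum_abs sum_mono]) (use Ql_bd that n1 in auto)
    then have 1: "\<bar>sn * (\<Sum>l'<K. Ql l' (x / real n))\<bar> \<le> sn * (real K * CQ)"
      using sn1 by (simp add: abs_mult mult_left_mono)
    have "\<bar>x * (lamn n * (\<Sum>k'<K. pn n k' * en n k') - 1)\<bar> \<le> real n * \<bar>lamn n * (\<Sum>k'<K. pn n k' * en n k') - 1\<bar>"
      unfolding abs_mult using that by (intro mult_right_mono) auto
    also have "\<dots> = sn * (sn * \<bar>lamn n * (\<Sum>k'<K. pn n k' * en n k') - 1\<bar>)" using snsq by simp
    also have "\<dots> \<le> sn * 1" using rho sn1 unfolding sn_def by (intro mult_left_mono) auto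
    finally have 2: "\<bar>x * (lamn n * (\<Sum>k'<K. pn n k' * en n k') - 1)\<bar> \<le> sn" by simp
    have 3: "sn * (real K * CQ + 1) = sn * (real K * CQ) + sn" by (simp add: algebra_simps)
    show ?thesis unfolding VA_rep using 1 2 3
      abs_triangle_ineq[of "sn * (\<Sum>l'<K. Ql l' (x / real n))" "x * (lamn n * (\<Sum>k'<K. pn n k' * en n k') - 1)"]
      by linarith
  qed
  show "\<bar>real (Nkl (\<lambda>i. u n i w) (\<lambda>i. v n i w) (\<lambda>i. Y n i w) (\<lambda>i. f (X n i w)) (c n w) k l (real n * t))
        / sqrt (real n)
      - pn n k * qn n k l / (\<Sum>r<K. pn n r * qn n r l)
        * (real (Nl K (\<lambda>i. u n i w) (\<lambda>i. v n i w) (\<lambda>i. Y n i w) (\<lambda>i. f (X n i w)) (c n w) l (real n * t))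
           / sqrt (real n))\<bar> \<le> \<epsilon>"
  proof -
    have div01: "x / real n \<in> {0..1}" if "0 \<le> x" "x \<le> real n" for x
      using that n1 by auto
    define NK where "NK k' = real (Nkl (\<lambda>i. u n i w) (\<lambda>i. v n i w) (\<lambda>i. Y n i w) (\<lambda>i. f (X n i w)) (c n w) k' l s)" for k'
    define NL where "NL = real (Nl K (\<lambda>i. u n i w) (\<lambda>i. v n i w) (\<lambda>i. Y n i w) (\<lambda>i. f (X n i w)) (c n w) l s)"
    have NLsum: "NL = (\<Sum>k'<K. NK k')" unfolding NL_def NK_def Nl_def by simp
    have eps0: "0 \<le> \<epsilon>" using eps by (smt (verit) mult_nonneg_nonneg of_nat_0_le_iff)
    have key: "\<bar>NK k - r * NL\<bar> \<le> sn * \<epsilon>"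
    proof (cases "Nl K (\<lambda>i. u n i w) (\<lambda>i. v n i w) (\<lambda>i. Y n i w) (\<lambda>i. f (X n i w)) (c n w) l s = 0")
      case True
      then have "NK k = 0" unfolding NK_def using kK by (simp add: Nl_def)
      moreover have "NL = 0" unfolding NL_def using True by simp
      ultimately show ?thesis using eps0 sn1 by simp
    next
      case False
      then have Npos: "0 < Nl K (\<lambda>i. u n i w) (\<lambda>i. v n i w) (\<lambda>i. Y n i w) (\<lambda>i. f (X n i w)) (c n w) l s" by simp
      obtain m0 where m0A: "m0 < A0 (\<lambda>i. u n i w) s" and Ts: "d.arr m0 \<le> s"
        and m0AT: "m0 < A0 (\<lambda>i. u n i w) (d.arr m0)"
        and before: "\<forall>t'. 0 \<le> t' \<and> t' < d.arr m0 \<longrightarrow> A0 (\<lambda>i. u n i w) t' \<le> m0"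
        and Nk: "\<forall>k'. Nkl (\<lambda>i. u n i w) (\<lambda>i. v n i w) (\<lambda>i. Y n i w) (\<lambda>i. f (X n i w)) (c n w) k' l s
                 = card {i. m0 \<le> i \<and> i < A0 (\<lambda>i. u n i w) s \<and> Y n i w = k' \<and> f (X n i w) = l}"
        and wkd: "d.wk l s - d.wk l (d.arr m0) \<le> d.VA s - d.Al s"
        using d.present[OF s0 Npos] by blast
      define T where "T = d.arr m0"
      have T0: "0 \<le> T" unfolding T_def by (rule d.arr_nn)
      have Ts': "T \<le> s" using Ts unfolding T_def .
      obtain r' where r': "0 \<le> r'" "r' \<le> s" "d.VA s - d.Al s \<le> \<bar>d.VA s - s\<bar> + \<bar>d.VA r' - r'\<bar> + 1"
        using d.work_bound[OF s0] by blast
      have work: "d.VA s - d.Al s \<le> 2 * sn * (real K * CQ + 1) + 1"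
        using r' VA_bd[of s] VA_bd[of r'] s0 by linarith
      define W where "W = 2 * (real K * CQ + 1) + 1 + 2 * CQ"
      have Qs: "\<bar>Ql l (s / real n)\<bar> \<le> CQ" by (rule Ql_bd[OF lK div01[OF s0]])
      have QT: "\<bar>Ql l (T / real n)\<bar> \<le> CQ" by (rule Ql_bd[OF lK div01]) (use T0 Ts' s0 in auto)
      have wdiff: "d.wk l s - d.wk l T = sn * (Ql l (s / real n) - Ql l (T / real n)) + lamn n * cl l * (s - T)"
        using wk_rep[of l s] wk_rep[of l T] by (simp add: algebra_simps)
      have snQ: "sn * (Ql l (s / real n) - Ql l (T / real n)) \<ge> - (sn * (2 * CQ))"
      proof -
        have "\<bar>Ql l (s / real n) - Ql l (T / real n)\<bar> \<le> 2 * CQ" using Qs QT by linarith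
        then have "\<bar>sn * (Ql l (s / real n) - Ql l (T / real n))\<bar> \<le> sn * (2 * CQ)"
          using sn1 by (simp add: abs_mult mult_left_mono)
        then show ?thesis by linarith
      qed
      have "lamn n * cl l * (s - T) \<le> 2 * sn * (real K * CQ + 1) + 1 + sn * (2 * CQ)"
        using wkd work wdiff snQ unfolding T_def by linarith
      also have "\<dots> \<le> sn * W" unfolding W_def using sn1 by (simp add: algebra_simps)
      finally have lcs: "lamn n * cl l * (s - T) \<le> sn * W" .
      have lc: "lam * clb / 4 \<le> lamn n * cl l"
      proof -
        have "(lam / 2) * (clb / 2) \<le> lamn n * cl l"
          by (rule mult_mono) (use lam cl in \<open>auto simp: cl_def\<close>)
        then show ?thesis by simp
      qed
      have sT0: "0 \<le> s - T" using Ts' by simp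
      have "lam * clb / 4 * (s - T) \<le> lamn n * cl l * (s - T)" by (rule mult_right_mono[OF lc sT0])
      with lcs have "lam * clb / 4 * (s - T) \<le> sn * W" by linarith
      then have sTb: "s - T \<le> sn * W * 4 / (lam * clb)" using lam(3) cl(2) by (simp add: field_simps)
      have "(s - T) / real n \<le> (sn * W * 4 / (lam * clb)) / real n"
        by (rule divide_right_mono[OF sTb]) simp
      also have "\<dots> = 4 * W / (lam * clb) / sn" using snsq[symmetric] sn1 by (simp add: field_simps)
      also have "\<dots> \<le> \<delta>" using small1 unfolding W_def sn_def by simp
      finally have dT0: "s / real n - T / real n \<le> \<delta>" by (simp add: diff_divide_distrib)
      have "T / real n \<le> s / real n" using Ts' by (simp add: divide_right_mono)
      with dT0 have dT: "\<bar>s / real n - T / real n\<bar> \<le> \<delta>" by linarith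
      have sI: "s / real n \<in> {0..1}" by (rule div01[OF s0])
      have TI: "T / real n \<in> {0..1}" by (rule div01) (use T0 Ts' s0 in auto)
      define D where "D m = real (Cn n k l m) - r * (\<Sum>k'<K. real (Cn n k' l m))" for m
      have DA: "D (A0 (\<lambda>i. u n i w) x) = sn * (Ph n (x / real n) (PC k l) - r * (\<Sum>k'<K. Ph n (x / real n) (PC k' l)))" for x
      proof -
        have 1: "(\<Sum>k'<K. real (Cn n k' l (A0 (\<lambda>i. u n i w) x)))
            = sn * (\<Sum>k'<K. Ph n (x / real n) (PC k' l)) + den * real (A0 (\<lambda>i. u n i w) x)"
          by (simp add: ph_PC[OF n1] sum.distrib sum_distrib_left sum_distrib_right den_def sn_def)
        have 2: "real (Cn n k l (A0 (\<lambda>i. u n i w) x)) = sn * Ph n (x / real n) (PC k l) + pn n k * qn n k l * real (A0 (\<lambda>i. u n i w) x)"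
          by (simp add: ph_PC[OF n1] sn_def)
        have "D (A0 (\<lambda>i. u n i w) x) = sn * (Ph n (x / real n) (PC k l) - r * (\<Sum>k'<K. Ph n (x / real n) (PC k' l)))
            + (pn n k * qn n k l - r * den) * real (A0 (\<lambda>i. u n i w) x)"
          unfolding D_def 1 2 by (simp add: algebra_simps)
        then show ?thesis using rden by simp
      qed
      have diff1: "\<bar>D (A0 (\<lambda>i. u n i w) s) - D (A0 (\<lambda>i. u n i w) T)\<bar> \<le> sn * ((real K + 1) * \<epsilon>')"
      proof -
        have e1: "\<bar>Ph n (s / real n) (PC k l) - Ph n (T / real n) (PC k l)\<bar> \<le> \<epsilon>'"
          using equi Prim_mem(2)[OF kK lK] sI TI dT by blast
        have e2: "\<bar>(\<Sum>k'<K. Ph n (s / real n) (PC k' l)) - (\<Sum>k'<K. Ph n (T / real n) (PC k' l))\<bar> \<le> real K * \<epsilon>'"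
        proof -
          have "\<bar>(\<Sum>k'<K. Ph n (s / real n) (PC k' l)) - (\<Sum>k'<K. Ph n (T / real n) (PC k' l))\<bar>
              = \<bar>\<Sum>k'<K. Ph n (s / real n) (PC k' l) - Ph n (T / real n) (PC k' l)\<bar>"
            by (simp add: sum_subtractf)
          also have "\<dots> \<le> (\<Sum>k'<K. \<epsilon>')"
            by (rule order_trans[OF sum_abs sum_mono]) (use equi Prim_mem(2) lK sI TI dT in blast)
          finally show ?thesis by simp
        qed
        have e3: "\<bar>r * ((\<Sum>k'<K. Ph n (s / real n) (PC k' l)) - (\<Sum>k'<K. Ph n (T / real n) (PC k' l)))\<bar> \<le> real K * \<epsilon>'"
        proof -
          have "\<bar>r * ((\<Sum>k'<K. Ph n (s / real n) (PC k' l)) - (\<Sum>k'<K. Ph n (T / real n) (PC k' l)))\<bar>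
              \<le> 1 * (real K * \<epsilon>')"
            unfolding abs_mult by (rule mult_mono) (use r0 r1 e2 eps in auto)
          then show ?thesis by simp
        qed
        have "D (A0 (\<lambda>i. u n i w) s) - D (A0 (\<lambda>i. u n i w) T)
            = sn * ((Ph n (s / real n) (PC k l) - Ph n (T / real n) (PC k l))
               - r * ((\<Sum>k'<K. Ph n (s / real n) (PC k' l)) - (\<Sum>k'<K. Ph n (T / real n) (PC k' l))))"
          unfolding DA by (simp add: algebra_simps)
        then have "\<bar>D (A0 (\<lambda>i. u n i w) s) - D (A0 (\<lambda>i. u n i w) T)\<bar>
            = sn * \<bar>(Ph n (s / real n) (PC k l) - Ph n (T / real n) (PC k l))
               - r * ((\<Sum>k'<K. Ph n (s / real n) (PC k' l)) - (\<Sum>k'<K. Ph n (T / real n) (PC k' l)))\<bar>"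
          using sn1 by (simp add: abs_mult)
        also have "\<dots> \<le> sn * ((real K + 1) * \<epsilon>')"
          using e1 e3 sn1 by (intro mult_left_mono) (auto simp: algebra_simps)
        finally show ?thesis .
      qed
      have m0le: "m0 \<le> A0 (\<lambda>i. u n i w) T" using m0AT unfolding T_def by simp
      have diff2: "\<bar>D (A0 (\<lambda>i. u n i w) T) - D m0\<bar> \<le> real (A0 (\<lambda>i. u n i w) T) - real m0"
      proof -
        have "D (A0 (\<lambda>i. u n i w) T) - D m0
           = real (card {i. m0 \<le> i \<and> i < A0 (\<lambda>i. u n i w) T \<and> Y n i w = k \<and> f (X n i w) = l})
             - r * (\<Sum>k'<K. real (card {i. m0 \<le> i \<and> i < A0 (\<lambda>i. u n i w) T \<and> Y n i w = k' \<and> f (X n i w) = l}))"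
        proof -
          have cs: "real (card {i. m0 \<le> i \<and> i < A0 (\<lambda>i. u n i w) T \<and> Y n i w = k' \<and> f (X n i w) = l})
              = real (Cn n k' l (A0 (\<lambda>i. u n i w) T)) - real (Cn n k' l m0)" for k'
            by (rule card_split[OF m0le])
          show ?thesis unfolding D_def cs sum_subtractf by (rule alg1)
        qed
        moreover have yyK: "\<And>i. Y n i w < K" using model by auto
        note cl = card_lip[of "\<lambda>i. Y n i w" K r m0 "A0 (\<lambda>i. u n i w) T" k "\<lambda>i. f (X n i w) = l", OF yyK r0 r1 m0le]
        ultimately show ?thesis by (simp only:)
      qed
      have jump: "real (A0 (\<lambda>i. u n i w) T) - real m0 \<le> 2 * sn * \<epsilon>'"
      proof (cases "T = 0")
        case True
        have "real (A0 (\<lambda>i. u n i w) 0) = sn * Ph n 0 PA"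
          using ph_PA[OF n1, of 0] unfolding sn_def by simp
        also have "\<dots> \<le> sn * \<epsilon>'" using Ph0 sn1 by (intro mult_left_mono) auto
        finally have "real (A0 (\<lambda>i. u n i w) T) \<le> sn * \<epsilon>'" using True by simp
        moreover have "0 \<le> sn * \<epsilon>'" using sn1 eps by simp
        ultimately show ?thesis by simp
      next
        case False
        then have Tp: "0 < T" using T0 by simp
        define t' where "t' = T - min T 1 / 2"
        have t'0: "0 \<le> t'" "t' < T" "T - t' \<le> 1 / 2" using Tp unfolding t'_def by auto
        have At': "A0 (\<lambda>i. u n i w) t' \<le> m0" using before t'0 unfolding T_def by auto
        have t'I: "t' / real n \<in> {0..1}" by (rule div01) (use t'0 Ts' s0 in auto)
        have "t' / real n \<le> T / real n" using t'0 by (simp add: divide_right_mono)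
        then have "\<bar>T / real n - t' / real n\<bar> = (T - t') / real n" by (simp add: diff_divide_distrib)
        also have "\<dots> \<le> 1 / real n" using t'0 n1 by (intro divide_right_mono) auto
        also have "\<dots> \<le> \<delta>" by (rule small2)
        finally have dd: "\<bar>T / real n - t' / real n\<bar> \<le> \<delta>" .
        have eA: "\<bar>Ph n (T / real n) PA - Ph n (t' / real n) PA\<bar> \<le> \<epsilon>'"
          using equi Prim_mem(1) TI t'I dd by blast
        have "real (A0 (\<lambda>i. u n i w) T) - real (A0 (\<lambda>i. u n i w) t')
            = sn * (Ph n (T / real n) PA - Ph n (t' / real n) PA) + lamn n * (T - t')"
          using ph_PA[OF n1, of T] ph_PA[OF n1, of t'] unfolding sn_def by (simp add: algebra_simps)
        also have "\<dots> \<le> sn * \<epsilon>' + lam"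
        proof -
          have "sn * (Ph n (T / real n) PA - Ph n (t' / real n) PA) \<le> sn * \<epsilon>'"
            using eA sn1 by (intro mult_left_mono) auto
          moreover have "lamn n * (T - t') \<le> (2 * lam) * (1 / 2)"
            by (rule mult_mono) (use lam t'0 in auto)
          ultimately show ?thesis by simp
        qed
        also have "\<dots> \<le> 2 * sn * \<epsilon>'" using small3 unfolding sn_def by (simp add: mult.commute)
        finally show ?thesis using At' by linarith
      qed
      have NKk: "NK k' = real (Cn n k' l (A0 (\<lambda>i. u n i w) s)) - real (Cn n k' l m0)" for k'
      proof -
        have m0s: "m0 \<le> A0 (\<lambda>i. u n i w) s" using m0A by simp
        show ?thesis unfolding NK_def Nk[rule_format] by (rule card_split[OF m0s])
      qed
      have "NK k - r * NL = D (A0 (\<lambda>i. u n i w) s) - D m0"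
        unfolding NLsum NKk D_def sum_subtractf by (rule alg1[symmetric])
      then have "\<bar>NK k - r * NL\<bar> \<le> sn * ((real K + 1) * \<epsilon>') + 2 * sn * \<epsilon>'"
        using diff1 diff2 jump by linarith
      also have "\<dots> = sn * ((real K + 3) * \<epsilon>')" by (simp add: algebra_simps)
      also have "\<dots> \<le> sn * \<epsilon>" using eps sn1 by (intro mult_left_mono) auto
      finally show ?thesis .
    qed
    have "\<bar>NK k / sn - r * (NL / sn)\<bar> = \<bar>NK k - r * NL\<bar> / sn"
      using sn1 by (simp add: field_simps)
    also have "\<dots> \<le> \<epsilon>" using key sn1 by (simp add: field_simps)
    finally show ?thesis unfolding NK_def NL_def s_def sn_def r_def den_def .
  qed
qed


lemma finite_Prim: "finite (Prim K)"
proof -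
  have "Prim K \<subseteq> insert PA ((\<lambda>(a, b). PC a b) ` ({..<K} \<times> {..<K}) \<union> (\<lambda>(a, b). PV a b) ` ({..<K} \<times> {..<K}))"
    unfolding Prim_def by auto
  then show ?thesis by (rule finite_subset) auto
qed

lemma pathwise:
  fixes p :: "nat \<Rightarrow> real" and q :: "nat \<Rightarrow> nat \<Rightarrow> real" and lam :: real and mu :: "nat \<Rightarrow> real"
  assumes frange: "\<forall>x. f x < K"
  and model: "\<forall>n\<ge>1. \<forall>i. 0 \<le> u n i w \<and> 0 < v n i w \<and> Y n i w < K"
  and pol: "\<forall>n\<ge>1. wc_pfcfs_policy K (real n) (\<lambda>i. u n i w) (\<lambda>i. v n i w) (\<lambda>i. Y n i w) (\<lambda>i. f (X n i w)) (c n w)"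
  and conv: "\<forall>i\<in>Prim K. \<forall>\<epsilon>>0. eventually (\<lambda>n. \<forall>t\<in>{0..1}. \<bar>Ph n t i - B t w i\<bar> \<le> \<epsilon>) sequentially"
  and cont: "\<forall>i\<in>Prim K. continuous_on {0..1} (\<lambda>t. B t w i)"
  and B0: "B 0 w PA = 0"
  and lam_c: "lamn \<longlonglongrightarrow> lam" and lam0: "0 < lam"
  and mu0: "\<forall>k<K. 0 < mu k"
  and e_c: "\<forall>k<K. (\<lambda>n. en n k) \<longlonglongrightarrow> 1 / mu k"
  and p_c: "\<forall>k<K. (\<lambda>n. pn n k) \<longlonglongrightarrow> p k"
  and q_c: "\<forall>k<K. \<forall>l<K. (\<lambda>n. qn n k l) \<longlonglongrightarrow> q k l"
  and p0: "\<forall>k<K. 0 \<le> p k" and q0: "\<forall>k<K. \<forall>l<K. 0 \<le> q k l"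
  and pqpos: "\<forall>l<K. 0 < (\<Sum>k<K. p k * q k l)"
  and pnn: "\<forall>n k. 0 \<le> pn n k" and qnn: "\<forall>n k l. 0 \<le> qn n k l"
  and pqsum: "\<forall>n\<ge>1. \<forall>k<K. (\<Sum>l<K. pn n k * qn n k l) = pn n k"
  and rho: "(\<lambda>n. sqrt (real n) * (lamn n * (\<Sum>k<K. pn n k * en n k) - 1)) \<longlonglongrightarrow> 0"
  shows "\<forall>k<K. \<forall>l<K. \<forall>\<epsilon>>0. eventually (\<lambda>n. \<forall>t\<in>{0..1}.
     \<bar>real (Nkl (\<lambda>i. u n i w) (\<lambda>i. v n i w) (\<lambda>i. Y n i w) (\<lambda>i. f (X n i w)) (c n w) k l (real n * t))
        / sqrt (real n)
      - pn n k * qn n k l / (\<Sum>r<K. pn n r * qn n r l)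
        * (real (Nl K (\<lambda>i. u n i w) (\<lambda>i. v n i w) (\<lambda>i. Y n i w) (\<lambda>i. f (X n i w)) (c n w) l (real n * t))
           / sqrt (real n))\<bar> \<le> \<epsilon>) sequentially"
proof (intro allI impI)
  fix k l :: nat and \<epsilon> :: real
  assume kK: "k < K" and lK: "l < K" and e: "0 < \<epsilon>"
  have finP: "finite (Prim K)" by (rule finite_Prim)
  define \<epsilon>' where "\<epsilon>' = \<epsilon> / (real K + 3)"
  have e'0: "0 < \<epsilon>'" unfolding \<epsilon>'_def using e by simp
  have eps: "(real K + 3) * \<epsilon>' \<le> \<epsilon>" unfolding \<epsilon>'_def by simp
  have "\<forall>i\<in>Prim K. \<exists>C. eventually (\<lambda>n. \<forall>t\<in>{0..1}. \<bar>Ph n t i\<bar> \<le> C) sequentially"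
  proof
    fix i assume i: "i \<in> Prim K"
    note ci = bspec[OF conv i]
    note co = bspec[OF cont i]
    show "\<exists>C. eventually (\<lambda>n. \<forall>t\<in>{0..1}. \<bar>Ph n t i\<bar> \<le> C) sequentially"
      by (rule unif_bound[OF ci co])
  qed
  then have "\<exists>Cf. \<forall>i\<in>Prim K. eventually (\<lambda>n. \<forall>t\<in>{0..1}. \<bar>Ph n t i\<bar> \<le> Cf i) sequentially"
    by (rule bchoice)
  then obtain Cf where Cf: "\<forall>i\<in>Prim K. eventually (\<lambda>n. \<forall>t\<in>{0..1}. \<bar>Ph n t i\<bar> \<le> Cf i) sequentially"
    by (elim exE)
  define Cb where "Cb = (\<Sum>i\<in>Prim K. \<bar>Cf i\<bar>)"
  have Cfle: "Cf i \<le> Cb" if "i \<in> Prim K" for i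
  proof -
    have "\<bar>Cf i\<bar> \<le> Cb" unfolding Cb_def by (rule member_le_sum[OF that _ finP]) simp
    then show ?thesis by linarith
  qed
  have evCb: "eventually (\<lambda>n. \<forall>i\<in>Prim K. \<forall>t\<in>{0..1}. \<bar>Ph n t i\<bar> \<le> Cb) sequentially"
  proof -
    have "eventually (\<lambda>n. \<forall>i\<in>Prim K. \<forall>t\<in>{0..1}. \<bar>Ph n t i\<bar> \<le> Cf i) sequentially"
      by (rule eventually_ball_finite[OF finP Cf])
    then show ?thesis
    proof eventually_elim
      case (elim n)
      show ?case
      proof (intro ballI)
        fix i t assume it: "i \<in> Prim K" "t \<in> {0..(1::real)}"
        have "\<bar>Ph n t i\<bar> \<le> Cf i" using elim it by blast
        then show "\<bar>Ph n t i\<bar> \<le> Cb" using Cfle[OF it(1)] by linarith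
      qed
    qed
  qed
  have "\<forall>i\<in>Prim K. \<exists>\<delta>>0. eventually (\<lambda>n. \<forall>t\<in>{0..1}. \<forall>t'\<in>{0..1}. \<bar>t - t'\<bar> \<le> \<delta> \<longrightarrow> \<bar>Ph n t i - Ph n t' i\<bar> \<le> \<epsilon>') sequentially"
  proof
    fix i assume i: "i \<in> Prim K"
    note ci = bspec[OF conv i]
    note co = bspec[OF cont i]
    show "\<exists>\<delta>>0. eventually (\<lambda>n. \<forall>t\<in>{0..1}. \<forall>t'\<in>{0..1}. \<bar>t - t'\<bar> \<le> \<delta> \<longrightarrow> \<bar>Ph n t i - Ph n t' i\<bar> \<le> \<epsilon>') sequentially"
      by (rule unif_equi[OF ci co e'0])
  qed
  then have "\<exists>df. \<forall>i\<in>Prim K. df i > 0 \<and> eventually (\<lambda>n. \<forall>t\<in>{0..1}. \<forall>t'\<in>{0..1}. \<bar>t - t'\<bar> \<le> df i \<longrightarrow> \<bar>Ph n t i - Ph n t' i\<bar> \<le> \<epsilon>') sequentially"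
    by (rule bchoice)
  then obtain df where df: "\<forall>i\<in>Prim K. df i > 0 \<and> eventually (\<lambda>n. \<forall>t\<in>{0..1}. \<forall>t'\<in>{0..1}. \<bar>t - t'\<bar> \<le> df i \<longrightarrow> \<bar>Ph n t i - Ph n t' i\<bar> \<le> \<epsilon>') sequentially"
    by (elim exE)
  have PAin: "PA \<in> Prim K" by (rule Prim_mem(1))
  define \<delta> where "\<delta> = Min (df ` Prim K)"
  have d0: "0 < \<delta>" unfolding \<delta>_def using finP PAin df by (subst Min_gr_iff) auto
  have dle: "\<delta> \<le> df i" if "i \<in> Prim K" for i unfolding \<delta>_def using finP that by (intro Min_le) auto
  have evEq: "eventually (\<lambda>n. \<forall>i\<in>Prim K. \<forall>t\<in>{0..1}. \<forall>t'\<in>{0..1}. \<bar>t - t'\<bar> \<le> \<delta> \<longrightarrow> \<bar>Ph n t i - Ph n t' i\<bar> \<le> \<epsilon>') sequentially"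
  proof -
    have "eventually (\<lambda>n. \<forall>i\<in>Prim K. \<forall>t\<in>{0..1}. \<forall>t'\<in>{0..1}. \<bar>t - t'\<bar> \<le> df i \<longrightarrow> \<bar>Ph n t i - Ph n t' i\<bar> \<le> \<epsilon>') sequentially"
      by (rule eventually_ball_finite[OF finP]) (use df in blast)
    then show ?thesis
    proof eventually_elim
      case (elim n)
      show ?case
      proof (intro ballI impI)
        fix i t t' assume a: "i \<in> Prim K" "t \<in> {0..1}" "t' \<in> {0..1}" "\<bar>t - t'\<bar> \<le> \<delta>"
        have "\<bar>t - t'\<bar> \<le> df i" using a(4) dle[OF a(1)] by linarith
        then show "\<bar>Ph n t i - Ph n t' i\<bar> \<le> \<epsilon>'" using elim a(1-3) by blast
      qed
    qed
  qed
  have evPh0: "eventually (\<lambda>n. \<bar>Ph n 0 PA\<bar> \<le> \<epsilon>') sequentially"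
  proof -
    have "eventually (\<lambda>n. \<forall>t\<in>{0..1}. \<bar>Ph n t PA - B t w PA\<bar> \<le> \<epsilon>') sequentially"
      using conv PAin e'0 by blast
    then show ?thesis
    proof eventually_elim
      case (elim n)
      have "(0::real) \<in> {0..1}" by simp
      with elim have "\<bar>Ph n 0 PA - B 0 w PA\<bar> \<le> \<epsilon>'" by blast
      then show ?case using B0 by simp
    qed
  qed
  define Z where "Z = 1 + (\<Sum>k'<K. \<bar>1 / mu k'\<bar>) + (\<Sum>k'<K. \<Sum>l'<K. \<bar>p k' * q k' l'\<bar>)"
  have evZe: "eventually (\<lambda>n. \<forall>k'\<in>{..<K}. \<bar>en n k'\<bar> \<le> Z) sequentially"
  proof (rule eventually_ball_finite, simp, intro ballI)
    fix k' assume k': "k' \<in> {..<K}"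
    have "(\<lambda>n. \<bar>en n k'\<bar>) \<longlonglongrightarrow> \<bar>1 / mu k'\<bar>" using e_c k' by (intro tendsto_rabs) auto
    then have "eventually (\<lambda>n. \<bar>en n k'\<bar> < \<bar>1 / mu k'\<bar> + 1) sequentially"
      by (rule order_tendstoD) simp
    moreover have "\<bar>1 / mu k'\<bar> \<le> (\<Sum>k'<K. \<bar>1 / mu k'\<bar>)" by (rule member_le_sum) (use k' in auto)
    moreover have "0 \<le> (\<Sum>k'<K. \<Sum>l'<K. \<bar>p k' * q k' l'\<bar>)" by (intro sum_nonneg) auto
    ultimately show "eventually (\<lambda>n. \<bar>en n k'\<bar> \<le> Z) sequentially"
      unfolding Z_def by (elim eventually_mono) linarith
  qed
  have evZpq: "eventually (\<lambda>n. \<forall>k'\<in>{..<K}. \<forall>l'\<in>{..<K}. \<bar>pn n k' * qn n k' l'\<bar> \<le> Z) sequentially"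
  proof (rule eventually_ball_finite, simp, intro ballI)
    fix k' assume k': "k' \<in> {..<K}"
    show "eventually (\<lambda>n. \<forall>l'\<in>{..<K}. \<bar>pn n k' * qn n k' l'\<bar> \<le> Z) sequentially"
    proof (rule eventually_ball_finite, simp, intro ballI)
      fix l' assume l': "l' \<in> {..<K}"
      have "(\<lambda>n. \<bar>pn n k' * qn n k' l'\<bar>) \<longlonglongrightarrow> \<bar>p k' * q k' l'\<bar>"
        using p_c q_c k' l' by (intro tendsto_rabs tendsto_mult) auto
      then have "eventually (\<lambda>n. \<bar>pn n k' * qn n k' l'\<bar> < \<bar>p k' * q k' l'\<bar> + 1) sequentially"
        by (rule order_tendstoD) simp
      moreover have "\<bar>p k' * q k' l'\<bar> \<le> (\<Sum>l'<K. \<bar>p k' * q k' l'\<bar>)" by (rule member_le_sum) (use l' in auto)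
      moreover have "(\<Sum>l'<K. \<bar>p k' * q k' l'\<bar>) \<le> (\<Sum>k'<K. \<Sum>l'<K. \<bar>p k' * q k' l'\<bar>)"
        by (rule member_le_sum[of k' "{..<K}" "\<lambda>k'. \<Sum>l'<K. \<bar>p k' * q k' l'\<bar>"]) (use k' in \<open>auto intro: sum_nonneg\<close>)
      moreover have "0 \<le> (\<Sum>k'<K. \<bar>1 / mu k'\<bar>)" by (intro sum_nonneg) auto
      ultimately show "eventually (\<lambda>n. \<bar>pn n k' * qn n k' l'\<bar> \<le> Z) sequentially"
        unfolding Z_def by (elim eventually_mono) linarith
    qed
  qed
  have evlam: "eventually (\<lambda>n. lam / 2 \<le> lamn n \<and> lamn n \<le> 2 * lam) sequentially"
  proof -
    have "eventually (\<lambda>n. lam / 2 < lamn n) sequentially" by (rule order_tendstoD(1)[OF lam_c]) (use lam0 in simp)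
    moreover have "eventually (\<lambda>n. lamn n < 2 * lam) sequentially" by (rule order_tendstoD(2)[OF lam_c]) (use lam0 in simp)
    ultimately show ?thesis by eventually_elim auto
  qed
  define cl0 where "cl0 = (\<Sum>k'<K. 1 / mu k' * (p k' * q k' l))"
  have cl0pos: "0 < cl0"
  proof -
    obtain k0 where k0: "k0 < K" "0 < p k0 * q k0 l"
    proof (rule ccontr)
      assume "\<not> thesis"
      then have "\<forall>k0<K. p k0 * q k0 l \<le> 0" using that by (meson not_less)
      then have "(\<Sum>k<K. p k * q k l) \<le> 0" by (intro sum_nonpos) auto
      with pqpos lK show False by auto
    qed
    have "1 / mu k0 * (p k0 * q k0 l) \<le> cl0" unfolding cl0_def
      by (rule member_le_sum) (use k0 mu0 p0 q0 lK in auto)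
    moreover have "0 < 1 / mu k0 * (p k0 * q k0 l)" using k0 mu0 by simp
    ultimately show ?thesis by linarith
  qed
  have evcl: "eventually (\<lambda>n. cl0 / 2 \<le> (\<Sum>k'<K. en n k' * (pn n k' * qn n k' l))) sequentially"
  proof -
    have "(\<lambda>n. \<Sum>k'<K. en n k' * (pn n k' * qn n k' l)) \<longlonglongrightarrow> cl0"
      unfolding cl0_def using e_c p_c q_c lK by (intro tendsto_sum tendsto_mult) auto
    then have "eventually (\<lambda>n. cl0 / 2 < (\<Sum>k'<K. en n k' * (pn n k' * qn n k' l))) sequentially"
      by (rule order_tendstoD(1)) (use cl0pos in simp)
    then show ?thesis by eventually_elim simp
  qed
  have evpq: "eventually (\<lambda>n. 0 < (\<Sum>k'<K. pn n k' * qn n k' l)) sequentially"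
  proof -
    have "(\<lambda>n. \<Sum>k'<K. pn n k' * qn n k' l) \<longlonglongrightarrow> (\<Sum>k'<K. p k' * q k' l)"
      using p_c q_c lK by (intro tendsto_sum tendsto_mult) auto
    then show ?thesis by (rule order_tendstoD(1)) (use pqpos lK in simp)
  qed
  have evrho: "eventually (\<lambda>n. sqrt (real n) * \<bar>lamn n * (\<Sum>k'<K. pn n k' * en n k') - 1\<bar> \<le> 1) sequentially"
  proof -
    have "(\<lambda>n. \<bar>sqrt (real n) * (lamn n * (\<Sum>k<K. pn n k * en n k) - 1)\<bar>) \<longlonglongrightarrow> \<bar>0\<bar>"
      by (rule tendsto_rabs[OF rho])
    then have "eventually (\<lambda>n. \<bar>sqrt (real n) * (lamn n * (\<Sum>k<K. pn n k * en n k) - 1)\<bar> < 1) sequentially"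
      by (rule order_tendstoD(2)) simp
    then show ?thesis by eventually_elim (simp add: abs_mult)
  qed
  define CQ where "CQ = real K * (Cb + Z * Cb + Z * Z * Cb)"
  define C1 where "C1 = 4 * (2 * (real K * CQ + 1) + 1 + 2 * CQ) / (lam * cl0)"
  have evs1: "eventually (\<lambda>n. C1 / sqrt (real n) \<le> \<delta>) sequentially"
  proof -
    have "(\<lambda>n. C1 * (1 / sqrt (real n))) \<longlonglongrightarrow> C1 * 0" by (intro tendsto_mult tendsto_const inv_sqrt_0)
    then have "eventually (\<lambda>n. C1 * (1 / sqrt (real n)) < \<delta>) sequentially"
      by (rule order_tendstoD(2)) (use d0 in simp)
    then show ?thesis by eventually_elim simp
  qed
  have evs2: "eventually (\<lambda>n. 1 / real n \<le> \<delta>) sequentially"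
  proof -
    have "(\<lambda>n. 1 / real n) \<longlonglongrightarrow> 0" by (rule lim_1_over_n)
    then have "eventually (\<lambda>n. 1 / real n < \<delta>) sequentially" by (rule order_tendstoD(2)) (use d0 in simp)
    then show ?thesis by eventually_elim simp
  qed
  have evs3: "eventually (\<lambda>n. lam \<le> sqrt (real n) * \<epsilon>') sequentially"
  proof -
    have "eventually (\<lambda>n. lam / \<epsilon>' \<le> sqrt (real n)) sequentially"
      using sqrt_at_top_seq unfolding filterlim_at_top by blast
    then show ?thesis by eventually_elim (use e'0 in \<open>simp add: field_simps\<close>)
  qed
  have evbnd: "eventually (\<lambda>n. 1 \<le> n \<longrightarrow> (\<exists>m. real n < (\<Sum>i<m. u n i w))) sequentially"
  proof -
    define c0 where "c0 = real (GREATEST m::nat. True)"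
    have "filterlim (\<lambda>n. (- c0 * (1 / sqrt (real n))) + lamn n * sqrt (real n)) at_top sequentially"
    proof (rule filterlim_tendsto_add_at_top)
      show "(\<lambda>n. - c0 * (1 / sqrt (real n))) \<longlonglongrightarrow> - c0 * 0" by (intro tendsto_mult tendsto_const inv_sqrt_0)
      show "filterlim (\<lambda>n. lamn n * sqrt (real n)) at_top sequentially"
        by (rule filterlim_tendsto_pos_mult_at_top[OF lam_c lam0 sqrt_at_top_seq])
    qed
    then have "eventually (\<lambda>n. Cb + 1 \<le> (- c0 * (1 / sqrt (real n))) + lamn n * sqrt (real n)) sequentially"
      unfolding filterlim_at_top by blast
    then show ?thesis using evCb
    proof eventually_elim
      case (elim n)
      show ?case
      proof (intro impI, rule ccontr)
        assume n1: "1 \<le> n" and nb: "\<not> (\<exists>m. real n < (\<Sum>i<m. u n i w))"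
        have sn: "0 < sqrt (real n)" using n1 by simp
        have "(\<lambda>m. (\<Sum>i<m. u n i w) \<le> real n) = (\<lambda>m. True)" using nb by (auto simp: not_less)
        then have A0c: "A0 (\<lambda>i. u n i w) (real n) = (GREATEST m::nat. True)" unfolding A0_def by simp
        have "Ph n 1 PA = (c0 - lamn n * real n) / sqrt (real n)"
          unfolding prim_hat_def Let_def c0_def using A0c by simp
        moreover have "\<bar>Ph n 1 PA\<bar> \<le> Cb" using elim(2) PAin by auto
        ultimately have "lamn n * real n - c0 \<le> Cb * sqrt (real n)" using sn by (simp add: field_simps abs_le_iff)
        moreover have "(Cb + 1) * sqrt (real n) \<le> lamn n * real n - c0"
        proof -
          have "(Cb + 1) * sqrt (real n) \<le> ((- c0 * (1 / sqrt (real n))) + lamn n * sqrt (real n)) * sqrt (real n)"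
            using elim(1) sn by (intro mult_right_mono) auto
          also have "\<dots> = lamn n * real n - c0" using sn by (simp add: field_simps)
          finally show ?thesis .
        qed
        ultimately show False using sn by (simp add: algebra_simps)
      qed
    qed
  qed
  have ev1: "eventually (\<lambda>n. 1 \<le> n) sequentially" by (rule eventually_ge_at_top)
  show "eventually (\<lambda>n. \<forall>t\<in>{0..1}.
     \<bar>real (Nkl (\<lambda>i. u n i w) (\<lambda>i. v n i w) (\<lambda>i. Y n i w) (\<lambda>i. f (X n i w)) (c n w) k l (real n * t))
        / sqrt (real n)
      - pn n k * qn n k l / (\<Sum>r<K. pn n r * qn n r l)
        * (real (Nl K (\<lambda>i. u n i w) (\<lambda>i. v n i w) (\<lambda>i. Y n i w) (\<lambda>i. f (X n i w)) (c n w) l (real n * t))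
           / sqrt (real n))\<bar> \<le> \<epsilon>) sequentially"
    using ev1 evbnd evCb evEq evPh0 evZe evZpq evlam evcl evpq evrho evs1 evs2 evs3
  proof eventually_elim
    case (elim n)
    show ?case
    proof (rule step_n[where \<epsilon>'=\<epsilon>' and \<delta>=\<delta> and Cb=Cb and Z=Z and CQ=CQ and lam=lam and clb=cl0])
      show "1 \<le> n" using elim(1) .
      show "k < K" "l < K" by (fact kK, fact lK)
      show "\<forall>x. f x < K" by (fact frange)
      show "\<forall>i. 0 \<le> u n i w \<and> 0 < v n i w \<and> Y n i w < K" using model elim(1) by blast
      show "wc_pfcfs_policy K (real n) (\<lambda>i. u n i w) (\<lambda>i. v n i w) (\<lambda>i. Y n i w) (\<lambda>i. f (X n i w)) (c n w)"
        using pol elim(1) by blast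
      show "\<exists>m. real n < (\<Sum>i<m. u n i w)" using elim(1,2) by blast
      show "\<forall>i\<in>Prim K. \<forall>t\<in>{0..1}. \<bar>Ph n t i\<bar> \<le> Cb" using elim(3) .
      show "\<forall>i\<in>Prim K. \<forall>t\<in>{0..1}. \<forall>t'\<in>{0..1}. \<bar>t - t'\<bar> \<le> \<delta> \<longrightarrow> \<bar>Ph n t i - Ph n t' i\<bar> \<le> \<epsilon>'"
        using elim(4) .
      show "\<bar>Ph n 0 PA\<bar> \<le> \<epsilon>'" using elim(5) .
      show "\<forall>k'<K. \<bar>en n k'\<bar> \<le> Z" using elim(6) by simp
      show "\<forall>k'<K. \<forall>l'<K. \<bar>pn n k' * qn n k' l'\<bar> \<le> Z" using elim(7) by simp
      show "CQ = real K * (Cb + Z * Cb + Z * Z * Cb)" by (simp add: CQ_def)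
      show "\<forall>k'<K. (\<Sum>l'<K. pn n k' * qn n k' l') = pn n k'" using pqsum elim(1) by blast
      show "\<forall>k'. 0 \<le> pn n k'" using pnn by blast
      show "\<forall>k' l'. 0 \<le> qn n k' l'" using qnn by blast
      show "0 < (\<Sum>k'<K. pn n k' * qn n k' l)" using elim(10) .
      show "lam / 2 \<le> lamn n" "lamn n \<le> 2 * lam" using elim(8) by simp_all
      show "0 < lam" by (fact lam0)
      show "cl0 / 2 \<le> (\<Sum>k'<K. en n k' * (pn n k' * qn n k' l))" using elim(9) .
      show "0 < cl0" by (fact cl0pos)
      show "sqrt (real n) * \<bar>lamn n * (\<Sum>k'<K. pn n k' * en n k') - 1\<bar> \<le> 1" using elim(11) .
      show "4 * (2 * (real K * CQ + 1) + 1 + 2 * CQ) / (lam * cl0) / sqrt (real n) \<le> \<delta>"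
        using elim(12) unfolding C1_def .
      show "1 / real n \<le> \<delta>" using elim(13) .
      show "lam \<le> sqrt (real n) * \<epsilon>'" using elim(14) .
      show "(real K + 3) * \<epsilon>' \<le> \<epsilon>" by (fact eps)
      show "0 \<le> \<epsilon>'" using e'0 by simp
    qed
  qed
qed

end



lemma pq_sum_lemma:
  fixes f :: "'x \<Rightarrow> nat"
  assumes prob: "prob_space M"
    and Ym: "(\<lambda>w. Y n 0 w) \<in> measurable M (count_space UNIV)"
    and fXm: "(\<lambda>w. f (X n 0 w)) \<in> measurable M borel"
    and fr: "\<forall>x. f x < K"
  shows "(\<Sum>l<K. p_n M Y n k * q_n M X Y f n k l) = p_n M Y n k"
proof -
  interpret P: prob_space M by (rule prob)
  define S where "S l = {w \<in> space M. Y n 0 w = k \<and> f (X n 0 w) = l}" for l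
  have Ssets: "S l \<in> sets M" for l
  proof -
    have "S l = ((\<lambda>w. Y n 0 w) -` {k} \<inter> space M) \<inter> ((\<lambda>w. f (X n 0 w)) -` {l} \<inter> space M)"
      unfolding S_def by auto
    moreover have "(\<lambda>w. Y n 0 w) -` {k} \<inter> space M \<in> sets M" by (rule measurable_sets[OF Ym]) simp
    moreover have "(\<lambda>w. f (X n 0 w)) -` {l} \<inter> space M \<in> sets M"
      by (rule measurable_sets[OF fXm]) (simp add: borel_closed)
    ultimately show ?thesis by simp
  qed
  define Pk where "Pk = measure M {w \<in> space M. Y n 0 w = k}"
  have un: "(\<Union>l\<in>{..<K}. S l) = {w \<in> space M. Y n 0 w = k}" unfolding S_def using fr by auto
  have "measure M (\<Union>l\<in>{..<K}. S l) = (\<Sum>l<K. measure M (S l))"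
  proof (rule measure_finite_Union)
    show "finite {..<K}" by simp
    show "S ` {..<K} \<subseteq> sets M" using Ssets by auto
    show "disjoint_family_on S {..<K}" by (auto simp: disjoint_family_on_def S_def)
    show "emeasure M (S l) \<noteq> \<infinity>" for l by (simp add: P.emeasure_eq_measure)
  qed
  then have sumS: "(\<Sum>l<K. measure M (S l)) = Pk" unfolding un Pk_def by simp
  show ?thesis
  proof (cases "Pk = 0")
    case True
    then show ?thesis unfolding p_n_def q_n_def Pk_def[symmetric] by simp
  next
    case False
    have "(\<Sum>l<K. p_n M Y n k * q_n M X Y f n k l) = (\<Sum>l<K. measure M (S l))"
      unfolding p_n_def q_n_def Pk_def[symmetric] S_def using False by simp
    then show ?thesis using sumS unfolding p_n_def Pk_def by simp
  qed
qed

theorem mainTheorem1: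
  fixes M :: "'w measure" and K :: nat
    and u v :: "nat \<Rightarrow> nat \<Rightarrow> 'w \<Rightarrow> real"
    and X :: "nat \<Rightarrow> nat \<Rightarrow> 'w \<Rightarrow> 'x::euclidean_space"
    and Y :: "nat \<Rightarrow> nat \<Rightarrow> 'w \<Rightarrow> nat"
    and f :: "'x \<Rightarrow> nat"
    and c :: "nat \<Rightarrow> 'w \<Rightarrow> real \<Rightarrow> nat option"
  assumes prob: "prob_space M"
    and f_meas: "f \<in> borel_measurable borel"
    and f_range: "\<forall>x. f x < K"
    and model: "\<forall>n\<ge>1. \<forall>i. \<forall>w\<in>space M. 0 \<le> u n i w \<and> 0 < v n i w \<and> Y n i w < K"
    and DGP_iid: "\<forall>n\<ge>1.
       prob_space.indep_vars M (\<lambda>_. borel \<Otimes>\<^sub>M borel \<Otimes>\<^sub>M borel \<Otimes>\<^sub>M count_space UNIV)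
         (\<lambda>i w. (u n i w, v n i w, X n i w, Y n i w)) UNIV \<and>
       (\<forall>i. distr M (borel \<Otimes>\<^sub>M borel \<Otimes>\<^sub>M borel \<Otimes>\<^sub>M count_space UNIV)
               (\<lambda>w. (u n i w, v n i w, X n i w, Y n i w))
          = distr M (borel \<Otimes>\<^sub>M borel \<Otimes>\<^sub>M borel \<Otimes>\<^sub>M count_space UNIV)
               (\<lambda>w. (u n 0 w, v n 0 w, X n 0 w, Y n 0 w)))"
    and DGP_indep: "\<forall>n\<ge>1.
       prob_space.indep_set M
         (sets (vimage_algebra (space M) (\<lambda>w i. u n i w) (PiM UNIV (\<lambda>_. borel))))
         (sets (vimage_algebra (space M) (\<lambda>w i. (v n i w, X n i w, Y n i w))
            (PiM UNIV (\<lambda>_. borel \<Otimes>\<^sub>M borel \<Otimes>\<^sub>M count_space UNIV))))"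
    and DGP_condindep: "\<forall>n\<ge>1. \<forall>i k (A :: real set) (B :: 'x set).
       A \<in> sets borel \<longrightarrow> B \<in> sets borel \<longrightarrow>
       measure M {w \<in> space M. v n i w \<in> A \<and> X n i w \<in> B \<and> Y n i w = k}
         * measure M {w \<in> space M. Y n i w = k}
       = measure M {w \<in> space M. v n i w \<in> A \<and> Y n i w = k}
         * measure M {w \<in> space M. X n i w \<in> B \<and> Y n i w = k}"
    and HT: "\<exists>(p :: nat \<Rightarrow> real) (q :: nat \<Rightarrow> nat \<Rightarrow> real) (lam :: real) (mu :: nat \<Rightarrow> real).
       (\<forall>k<K. 0 \<le> p k \<and> p k \<le> 1 \<and> 0 < mu k) \<and>
       (\<forall>k<K. \<forall>l<K. 0 \<le> q k l \<and> q k l \<le> 1) \<and> 0 < lam \<and>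
       (\<forall>l<K. (\<Sum>k<K. p k * q k l) > 0) \<and>
       lam * (\<Sum>k<K. p k / mu k) = 1 \<and>
       (\<lambda>n. sqrt (real n) * (lam_n M u n - lam)) \<longlonglongrightarrow> 0 \<and>
       (\<forall>k<K. (\<lambda>n. sqrt (real n) * (mu_n M v Y n k - mu k)) \<longlonglongrightarrow> 0) \<and>
       (\<forall>k<K. (\<lambda>n. sqrt (real n) * (p_n M Y n k - p k)) \<longlonglongrightarrow> 0) \<and>
       (\<forall>k<K. \<forall>l<K. (\<lambda>n. sqrt (real n) * (q_n M X Y f n k l - q k l)) \<longlonglongrightarrow> 0)"
    and UI_moments: "\<forall>n\<ge>1. integrable M (\<lambda>w. (u n 0 w)\<^sup>2) \<and> integrable M (\<lambda>w. (v n 0 w)\<^sup>2)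
       \<and> integrable M (\<lambda>w. (norm (X n 0 w))\<^sup>2)"
    and UI_tails: "\<exists>gu gv :: real \<Rightarrow> real. (gu \<longlongrightarrow> 0) at_top \<and> (gv \<longlongrightarrow> 0) at_top \<and>
       (\<forall>n\<ge>1. \<forall>x. (\<integral>w. (u n 0 w)\<^sup>2 * indicator {w. u n 0 w > x} w \<partial>M) \<le> gu x
                 \<and> (\<integral>w. (v n 0 w)\<^sup>2 * indicator {w. v n 0 w > x} w \<partial>M) \<le> gv x)"
    and UI_lim_u: "\<exists>\<alpha>u>0. (\<lambda>n. \<integral>w. (u n 0 w)\<^sup>2 \<partial>M) \<longlonglongrightarrow> \<alpha>u"
    and UI_lim_v: "\<forall>k<K. \<exists>\<alpha>v>0.
       (\<lambda>n. cond_exp_class M (\<lambda>w. (v n 0 w)\<^sup>2) (Y n 0) k) \<longlonglongrightarrow> \<alpha>v"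
    and skorohod: "\<exists>B. brownian_motion01 M (Prim K) B \<and>
       (AE w in M. \<forall>i\<in>Prim K. \<forall>\<epsilon>>0. \<forall>\<^sub>F n in sequentially. \<forall>t\<in>{0..1}.
          \<bar>prim_hat M u v X Y f n w t i - B t w i\<bar> \<le> \<epsilon>)"
    and policy: "\<forall>n\<ge>1. AE w in M.
       wc_pfcfs_policy K (real n) (\<lambda>i. u n i w) (\<lambda>i. v n i w) (\<lambda>i. Y n i w) (\<lambda>i. f (X n i w)) (c n w)"
  shows "AE w in M. \<forall>k<K. \<forall>l<K. \<forall>\<epsilon>>0. \<forall>\<^sub>F n in sequentially. \<forall>t\<in>{0..1}.
     \<bar>real (Nkl (\<lambda>i. u n i w) (\<lambda>i. v n i w) (\<lambda>i. Y n i w) (\<lambda>i. f (X n i w)) (c n w) k l (real n * t))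
        / sqrt (real n)
      - p_n M Y n k * q_n M X Y f n k l / (\<Sum>r<K. p_n M Y n r * q_n M X Y f n r l)
        * (real (Nl K (\<lambda>i. u n i w) (\<lambda>i. v n i w) (\<lambda>i. Y n i w) (\<lambda>i. f (X n i w)) (c n w) l (real n * t))
           / sqrt (real n))\<bar> \<le> \<epsilon>"
proof -
  interpret P: prob_space M by (rule prob)
  obtain p :: "nat \<Rightarrow> real" and q :: "nat \<Rightarrow> nat \<Rightarrow> real" and lam :: real and mu :: "nat \<Rightarrow> real" where
    h1: "\<forall>k<K. 0 \<le> p k \<and> p k \<le> 1 \<and> 0 < mu k" and
    h2: "\<forall>k<K. \<forall>l<K. 0 \<le> q k l \<and> q k l \<le> 1" and h3: "0 < lam" and
    h4: "\<forall>l<K. (\<Sum>k<K. p k * q k l) > 0" and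
    h5: "lam * (\<Sum>k<K. p k / mu k) = 1" and
    h6: "(\<lambda>n. sqrt (real n) * (lam_n M u n - lam)) \<longlonglongrightarrow> 0" and
    h7: "\<forall>k<K. (\<lambda>n. sqrt (real n) * (mu_n M v Y n k - mu k)) \<longlonglongrightarrow> 0" and
    h8: "\<forall>k<K. (\<lambda>n. sqrt (real n) * (p_n M Y n k - p k)) \<longlonglongrightarrow> 0" and
    h9: "\<forall>k<K. \<forall>l<K. (\<lambda>n. sqrt (real n) * (q_n M X Y f n k l - q k l)) \<longlonglongrightarrow> 0"
    using HT by blast
  obtain B where bm: "brownian_motion01 M (Prim K) B" and
    skor: "AE w in M. \<forall>i\<in>Prim K. \<forall>\<epsilon>>0. \<forall>\<^sub>F n in sequentially. \<forall>t\<in>{0..1}.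
          \<bar>prim_hat M u v X Y f n w t i - B t w i\<bar> \<le> \<epsilon>"
    using skorohod by blast
  have bmAE: "AE w in M. \<forall>i\<in>Prim K. B 0 w i = 0 \<and> continuous_on {0..1} (\<lambda>t. B t w i)"
    using bm unfolding brownian_motion01_def by blast
  have polAE: "AE w in M. \<forall>n. 1 \<le> n \<longrightarrow>
       wc_pfcfs_policy K (real n) (\<lambda>i. u n i w) (\<lambda>i. v n i w) (\<lambda>i. Y n i w) (\<lambda>i. f (X n i w)) (c n w)"
    unfolding AE_all_countable
  proof
    fix n :: nat
    show "AE w in M. 1 \<le> n \<longrightarrow>
       wc_pfcfs_policy K (real n) (\<lambda>i. u n i w) (\<lambda>i. v n i w) (\<lambda>i. Y n i w) (\<lambda>i. f (X n i w)) (c n w)"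
    proof (cases "1 \<le> n")
      case True
      then have a: "AE w in M. wc_pfcfs_policy K (real n) (\<lambda>i. u n i w) (\<lambda>i. v n i w) (\<lambda>i. Y n i w) (\<lambda>i. f (X n i w)) (c n w)"
        using policy by blast
      show ?thesis using a by eventually_elim simp
    next
      case False
      then show ?thesis by simp
    qed
  qed
  have lam_c: "(\<lambda>n. lam_n M u n) \<longlonglongrightarrow> lam" by (rule rate_conv[OF h6])
  have mu0: "\<forall>k<K. 0 < mu k" using h1 by blast
  have e_rate: "(\<lambda>n. sqrt (real n) * (1 / mu_n M v Y n k - 1 / mu k)) \<longlonglongrightarrow> 0" if "k < K" for k
    using rate_inv[of "\<lambda>n. mu_n M v Y n k" "mu k"] h7 mu0 that by fastforce
  have e_c: "\<forall>k<K. (\<lambda>n. 1 / mu_n M v Y n k) \<longlonglongrightarrow> 1 / mu k"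
    using e_rate by (blast intro: rate_conv)
  have p_c: "\<forall>k<K. (\<lambda>n. p_n M Y n k) \<longlonglongrightarrow> p k" using h8 by (blast intro: rate_conv)
  have q_c: "\<forall>k<K. \<forall>l<K. (\<lambda>n. q_n M X Y f n k l) \<longlonglongrightarrow> q k l" using h9 by (blast intro: rate_conv)
  have p0: "\<forall>k<K. 0 \<le> p k" using h1 by blast
  have q0: "\<forall>k<K. \<forall>l<K. 0 \<le> q k l" using h2 by blast
  have pnn: "\<forall>n k. 0 \<le> p_n M Y n k" unfolding p_n_def by simp
  have qnn: "\<forall>n k l. 0 \<le> q_n M X Y f n k l" unfolding q_n_def p_n_def by simp
  have pqsum: "\<forall>n\<ge>1. \<forall>k<K. (\<Sum>l<K. p_n M Y n k * q_n M X Y f n k l) = p_n M Y n k"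
  proof (intro allI impI)
    fix n k :: nat assume n1: "1 \<le> n" and "k < K"
    have rv: "(\<lambda>w. (u n 0 w, v n 0 w, X n 0 w, Y n 0 w)) \<in> measurable M (borel \<Otimes>\<^sub>M borel \<Otimes>\<^sub>M borel \<Otimes>\<^sub>M count_space UNIV)"
      using DGP_iid n1 unfolding P.indep_vars_def by blast
    have Ym: "(\<lambda>w. Y n 0 w) \<in> measurable M (count_space UNIV)"
    proof -
      have "(\<lambda>w. snd (snd (snd (u n 0 w, v n 0 w, X n 0 w, Y n 0 w)))) \<in> measurable M (count_space UNIV)"
        by (rule measurable_compose[OF rv]) measurable
      then show ?thesis by simp
    qed
    have Xm: "(\<lambda>w. X n 0 w) \<in> borel_measurable M"
    proof -
      have "(\<lambda>w. fst (snd (snd (u n 0 w, v n 0 w, X n 0 w, Y n 0 w)))) \<in> borel_measurable M"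
        by (rule measurable_compose[OF rv]) measurable
      then show ?thesis by simp
    qed
    have fXm: "(\<lambda>w. f (X n 0 w)) \<in> measurable M borel"
      by (rule measurable_compose[OF Xm f_meas])
    show "(\<Sum>l<K. p_n M Y n k * q_n M X Y f n k l) = p_n M Y n k"
      by (rule pq_sum_lemma[where M=M and Y=Y and n=n and f=f and X=X and K=K and k=k, OF prob Ym fXm f_range])
  qed
  have rho: "(\<lambda>n. sqrt (real n) * (lam_n M u n * (\<Sum>k<K. p_n M Y n k * (1 / mu_n M v Y n k)) - 1)) \<longlonglongrightarrow> 0"
  proof -
    have pe: "(\<lambda>n. sqrt (real n) * (p_n M Y n k * (1 / mu_n M v Y n k) - p k * (1 / mu k))) \<longlonglongrightarrow> 0"
      if "k \<in> {..<K}" for k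
      by (rule rate_prod) (use h8 e_rate that in auto)
    have s: "(\<lambda>n. sqrt (real n) * ((\<Sum>k<K. p_n M Y n k * (1 / mu_n M v Y n k)) - (\<Sum>k<K. p k * (1 / mu k)))) \<longlonglongrightarrow> 0"
      by (rule rate_sum[where a="\<lambda>n k. p_n M Y n k * (1 / mu_n M v Y n k)", OF pe])
    have "(\<lambda>n. sqrt (real n) * (lam_n M u n * (\<Sum>k<K. p_n M Y n k * (1 / mu_n M v Y n k)) - lam * (\<Sum>k<K. p k * (1 / mu k)))) \<longlonglongrightarrow> 0"
      by (rule rate_prod[OF h6 s])
    moreover have "lam * (\<Sum>k<K. p k * (1 / mu k)) = 1" using h5 by simp
    ultimately show ?thesis by simp
  qed
  have modelw: "\<forall>n\<ge>1. \<forall>i. 0 \<le> u n i w \<and> 0 < v n i w \<and> Y n i w < K" if "w \<in> space M" for w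
    using model that by blast
  show ?thesis
    using AE_space skor bmAE polAE
  proof eventually_elim
    case (elim w)
    interpret pw M K u v X Y f c w B .
    show ?case
    proof (rule pathwise[where p=p and q=q and lam=lam and mu=mu])
      show "\<forall>x. f x < K" by (fact f_range)
      show "\<forall>n\<ge>1. \<forall>i. 0 \<le> u n i w \<and> 0 < v n i w \<and> Y n i w < K" by (rule modelw[OF elim(1)])
      show "\<forall>n\<ge>1. wc_pfcfs_policy K (real n) (\<lambda>i. u n i w) (\<lambda>i. v n i w) (\<lambda>i. Y n i w) (\<lambda>i. f (X n i w)) (c n w)"
        using elim(4) by blast
      show "\<forall>i\<in>Prim K. \<forall>\<epsilon>>0. eventually (\<lambda>n. \<forall>t\<in>{0..1}. \<bar>prim_hat M u v X Y f n w t i - B t w i\<bar> \<le> \<epsilon>) sequentially"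
        using elim(2) .
      show "\<forall>i\<in>Prim K. continuous_on {0..1} (\<lambda>t. B t w i)" using elim(3) by blast
      show "B 0 w PA = 0" using elim(3) Prim_mem(1) by blast
      show "(\<lambda>n. lam_n M u n) \<longlonglongrightarrow> lam" by (fact lam_c)
      show "0 < lam" by (fact h3)
      show "\<forall>k<K. 0 < mu k" by (fact mu0)
      show "\<forall>k<K. (\<lambda>n. 1 / mu_n M v Y n k) \<longlonglongrightarrow> 1 / mu k" by (fact e_c)
      show "\<forall>k<K. (\<lambda>n. p_n M Y n k) \<longlonglongrightarrow> p k" by (fact p_c)
      show "\<forall>k<K. \<forall>l<K. (\<lambda>n. q_n M X Y f n k l) \<longlonglongrightarrow> q k l" by (fact q_c)
      show "\<forall>k<K. 0 \<le> p k" by (fact p0)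
      show "\<forall>k<K. \<forall>l<K. 0 \<le> q k l" by (fact q0)
      show "\<forall>l<K. 0 < (\<Sum>k<K. p k * q k l)" using h4 by blast
      show "\<forall>n k. 0 \<le> p_n M Y n k" by (fact pnn)
      show "\<forall>n k l. 0 \<le> q_n M X Y f n k l" by (fact qnn)
      show "\<forall>n\<ge>1. \<forall>k<K. (\<Sum>l<K. p_n M Y n k * q_n M X Y f n k l) = p_n M Y n k" by (fact pqsum)
      show "(\<lambda>n. sqrt (real n) * (lam_n M u n * (\<Sum>k<K. p_n M Y n k * (1 / mu_n M v Y n k)) - 1)) \<longlonglongrightarrow> 0"
        by (fact rho)
    qed
  qed
qed

end
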